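(* Consider the impulsive seasonally forced system $$\dot S=S(A-S)-\beta_\gamma(t)IS,\qquad \dot I=\beta_\gamma(t)IS-(\sigma+g)I,\qquad t\neq nT,$$ $$S(nT)=(1-p)S(nT^-),\qquad I(nT)=I(nT^-),\quad n\in\mathbb{N},$$ with $\beta_\gamma(t)=\beta_0(1+\gamma\Psi(\omega t))$. For $\gamma,\omega>0$ small and $A>S_c$, the $T$-periodic solution $(\mathcal{S},0)$ is asymptotically stable if and only if $p_2^{\rm seas}(T)<p<p_1(T)$, where $$p_1(T)=1-e^{-AT},\qquad p_2^{\rm seas}(T)=1-\exp\left\{-\left[(A-S_c)T+\gamma\int_0^T\Psi(\omega t)\mathcal{S}(t)\,dt\right]\right\}.$$
   Context: Parameters: $A\in(0,1]$, $\beta_0>0$, $\sigma,g\ge0$ with $\sigma+g>0$, $p\in[0,1]$, $T>0$; $S_c=(\sigma+g)/\beta_0$; it is assumed $S(t)\le A$ for all $t$. $\Psi:\mathbb{R}\to\mathbb{R}^+$ is $\tau$-periodic (for some $\tau>0$) with at least two nondegenerate critical points and $\frac1\tau\int_0^\tau\beta_\gamma>0$. $\mathcal{S}$ is the $T$-periodic function given for $nT\le t<(n+1)T$ by $\mathcal{S}(t)=\frac{A[e^{AT}(1-p)-1]}{e^{AT}(1-p)-1+pe^{A(T-(t-nT))}}$, and $(\mathcal{S},0)$ is a solution of the system. A $T$-periodic solution through $x_0$ is asymptotically stable if for every neighbourhood $V$ of $x_0$ there is a neighbourhood $W\subset V$ with $\varphi(kT,y_0)\in V$ for all $y_0\in W$,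 $k\in\mathbb{N}$, and there is a neighbourhood $V$ with $\varphi(kT,y_0)\to x_0$ as $k\to\infty$ for all $y_0\in V$. *)

theory Defs
  imports "HOL-Analysis.Analysis"
begin

definition beta_seas :: "real \<Rightarrow> real \<Rightarrow> real \<Rightarrow> (real \<Rightarrow> real) \<Rightarrow> real \<Rightarrow> real" where
  "beta_seas \<beta>0 \<gamma> \<omega> \<Psi> t = \<beta>0 * (1 + \<gamma> * \<Psi> (\<omega> * t))"

definition si_field :: "(real \<Rightarrow> real) \<Rightarrow> real \<Rightarrow> real \<Rightarrow> real \<Rightarrow> real \<Rightarrow> real \<times> real \<Rightarrow> real \<times> real" where
  "si_field b A \<sigma> g t z =
     (fst z * (A - fst z) - b t * snd z * fst z,
      b t * snd z * fst z - (\<sigma> + g) * snd z)"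

definition si_jump :: "real \<Rightarrow> real \<times> real \<Rightarrow> real \<times> real" where
  "si_jump p z = ((1 - p) * fst z, snd z)"

definition impulsive_solution ::
  "(real \<Rightarrow> real \<times> real \<Rightarrow> real \<times> real) \<Rightarrow> (real \<times> real \<Rightarrow> real \<times> real) \<Rightarrow> real
     \<Rightarrow> (real \<Rightarrow> real \<times> real) \<Rightarrow> bool" where
  "impulsive_solution F J T x \<longleftrightarrow>
     (\<forall>n::nat.
        continuous_on {real n * T ..< real (Suc n) * T} x \<and>
        (\<forall>t \<in> {real n * T <..< real (Suc n) * T}. (x has_vector_derivative F t (x t)) (at t)) \<and>
        (\<exists>L. (x \<longlongrightarrow> L) (at_left (real (Suc n) * T)) \<and> x (real (Suc n) * T) = J L))"

text \<open>Asymptotic stability of the T-periodic solution through x0, in terms of the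
  stroboscopic values phi(kT, y0) of the (unique) solution starting at y0 at time 0.\<close>
definition asymp_stable_periodic ::
  "(real \<Rightarrow> real \<times> real \<Rightarrow> real \<times> real) \<Rightarrow> (real \<times> real \<Rightarrow> real \<times> real) \<Rightarrow> real
     \<Rightarrow> real \<times> real \<Rightarrow> bool" where
  "asymp_stable_periodic F J T x0 \<longleftrightarrow>
     (\<forall>V. open V \<and> x0 \<in> V \<longrightarrow>
        (\<exists>W. open W \<and> x0 \<in> W \<and> W \<subseteq> V \<and>
           (\<forall>y0 \<in> W. (\<exists>x. impulsive_solution F J T x \<and> x 0 = y0) \<and>
              (\<forall>x. impulsive_solution F J T x \<and> x 0 = y0 \<longrightarrow> (\<forall>k::nat. x (real k * T) \<in> V))))) \<and>
     (\<exists>V. open V \<and> x0 \<in> V \<and>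
        (\<forall>y0 \<in> V. (\<exists>x. impulsive_solution F J T x \<and> x 0 = y0) \<and>
           (\<forall>x. impulsive_solution F J T x \<and> x 0 = y0 \<longrightarrow>
               (\<lambda>k::nat. x (real k * T)) \<longlonglongrightarrow> x0)))"

definition Sper :: "real \<Rightarrow> real \<Rightarrow> real \<Rightarrow> real \<Rightarrow> real" where
  "Sper A p T t =
     (let s = t - T * of_int \<lfloor>t / T\<rfloor> in
       A * (exp (A * T) * (1 - p) - 1) / (exp (A * T) * (1 - p) - 1 + p * exp (A * (T - s))))"

definition p1 :: "real \<Rightarrow> real \<Rightarrow> real" where
  "p1 A T = 1 - exp (- (A * T))"

definition p2_seas :: "real \<Rightarrow> real \<Rightarrow> real \<Rightarrow> real \<Rightarrow> real \<Rightarrow> real \<Rightarrow> (real \<Rightarrow> real) \<Rightarrow> real \<Rightarrow> real" where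
  "p2_seas A Sc p \<gamma> \<omega> T \<Psi> T' =
     1 - exp (- ((A - Sc) * T' + \<gamma> * integral {0..T'} (\<lambda>t. \<Psi> (\<omega> * t) * Sper A p T t)))"

end

theory Submission
  imports Defs
begin


lemma vd_fst:
  assumes "(y has_vector_derivative v) (at t)"
  shows "((\<lambda>t. fst (y t)) has_real_derivative fst v) (at t)"
  using has_derivative_fst[OF assms[unfolded has_vector_derivative_def]]
  by (simp add: has_real_derivative_iff_has_vector_derivative has_vector_derivative_def)

lemma vd_snd:
  assumes "(y has_vector_derivative v) (at t)"
  shows "((\<lambda>t. snd (y t)) has_real_derivative snd v) (at t)"
  using has_derivative_snd[OF assms[unfolded has_vector_derivative_def]]
  by (simp add: has_real_derivative_iff_has_vector_derivative has_vector_derivative_def)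

lemma mono_le:
  fixes f f' :: "real \<Rightarrow> real"
  assumes "a \<le> b" "continuous_on {a..b} f"
    and "\<And>r. a < r \<Longrightarrow> r < b \<Longrightarrow> (f has_real_derivative f' r) (at r)"
    and "\<And>r. a < r \<Longrightarrow> r < b \<Longrightarrow> f' r \<le> 0"
  shows "f b \<le> f a"
  using DERIV_nonpos_imp_decreasing_open[OF assms(1) _ assms(2)] assms(3,4) by blast

lemma mono_ge:
  fixes f f' :: "real \<Rightarrow> real"
  assumes "a \<le> b" "continuous_on {a..b} f"
    and "\<And>r. a < r \<Longrightarrow> r < b \<Longrightarrow> (f has_real_derivative f' r) (at r)"
    and "\<And>r. a < r \<Longrightarrow> r < b \<Longrightarrow> f' r \<ge> 0"
  shows "f a \<le> f b"
  using DERIV_nonneg_imp_increasing_open[OF assms(1) _ assms(2)] assms(3,4) by blast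

lemma extend_closed:
  fixes x :: "real \<Rightarrow> 'a::topological_space"
  assumes "a < b" "continuous_on {a..<b} x" "(x \<longlongrightarrow> L) (at_left b)"
  shows "continuous_on {a..b} (x(b:=L))"
  unfolding continuous_on_def
proof
  fix t assume t: "t \<in> {a..b}"
  have triv: "((x(b:=L)) \<longlongrightarrow> l) (at t within {b})" for l
  proof -
    have "at t within {b} = bot" by (cases "t = b") (auto simp: at_within_eq_bot_iff)
    then show ?thesis by simp
  qed
  have eqv: "\<forall>\<^sub>F s in at t within {a..<b}. x s = (x(b:=L)) s"
    by (auto simp: eventually_at_filter)
  have "((x(b:=L)) \<longlongrightarrow> (x(b:=L)) t) (at t within {a..<b})"
  proof (cases "t = b")
    case True
    have "(x \<longlongrightarrow> L) (at b within {a..<b})"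
      using assms(3) by (rule tendsto_within_subset) auto
    then show ?thesis using True tendsto_cong[OF eqv] by (simp add: fun_upd_def)
  next
    case False
    then have "t \<in> {a..<b}" using t by auto
    then have "(x \<longlongrightarrow> x t) (at t within {a..<b})"
      using assms(2) by (simp add: continuous_on_def)
    then show ?thesis using False tendsto_cong[OF eqv] by (simp add: fun_upd_def)
  qed
  then have "((x(b:=L)) \<longlongrightarrow> (x(b:=L)) t) (at t within {a..<b} \<union> {b})"
    using triv[of "(x(b:=L)) t"] Lim_within_Un by blast
  moreover have "{a..<b} \<union> {b} = {a..b}" using assms(1) by auto
  ultimately show "((x(b:=L)) \<longlongrightarrow> (x(b:=L)) t) (at t within {a..b})" by simp
qed

lemma norm_le_sum: "norm (z::real\<times>real) \<le> \<bar>fst z\<bar> + \<bar>snd z\<bar>"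
proof -
  have "norm z = norm ((fst z, 0) + (0, snd z))" by simp
  also have "\<dots> \<le> norm (fst z, (0::real)) + norm ((0::real), snd z)" by (rule norm_triangle_ineq)
  finally show ?thesis by (simp add: norm_Pair)
qed

lemma abs_fst_le: "\<bar>fst (z::real\<times>real)\<bar> \<le> norm z"
  by (cases z) (metis fst_conv norm_fst_le real_norm_def)
lemma abs_snd_le: "\<bar>snd (z::real\<times>real)\<bar> \<le> norm z"
  by (cases z) (metis snd_conv norm_snd_le real_norm_def)


lemma exp_int_formula:
  fixes L a x :: real assumes "a \<le> x"
  shows "integral {a..x} (\<lambda>s. L * exp (L*(s-a))) = exp (L*(x-a)) - 1"
proof -
  have "((\<lambda>s. L * exp (L*(s-a))) has_integral (exp (L*(x-a)) - exp (L*(a-a)))) {a..x}"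
    apply (rule fundamental_theorem_of_calculus[OF assms])
    apply (auto intro!: derivative_eq_intros simp: has_real_derivative_iff_has_vector_derivative[symmetric])
    done
  then have "((\<lambda>s. L * exp (L*(s-a))) has_integral (exp (L*(x-a)) - 1)) {a..x}" by simp
  then show ?thesis by (rule integral_unique)
qed

lemma picard:
  fixes G :: "real \<Rightarrow> real\<times>real \<Rightarrow> real\<times>real"
  assumes L: "L > 0" and lip: "\<And>t z w. norm (G t z - G t w) \<le> L * norm (z - w)"
    and bnd: "\<And>t z. norm (G t z) \<le> M"
    and cont: "\<And>x. continuous_on UNIV x \<Longrightarrow> continuous_on {a..b} (\<lambda>t. G t (x t))"
    and ab: "a < b"
  shows "\<exists>x. continuous_on {a..b} x \<and> x a = y0 \<and> (\<forall>t\<in>{a<..<b}. (x has_vector_derivative G t (x t)) (at t))"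
proof -
  define cl where "cl t = max a (min b t)" for t
  have cl_in: "cl t \<in> {a..b}" for t using ab by (auto simp: cl_def)
  have cl_id: "t \<in> {a..b} \<Longrightarrow> cl t = t" for t by (auto simp: cl_def)
  have cl_cont: "continuous_on UNIV cl" unfolding cl_def by (intro continuous_intros)
  define E where "E v t = exp (L*(cl t - a)) *\<^sub>R apply_bcontfun v t" for v :: "real \<Rightarrow>\<^sub>C (real\<times>real)" and t
  have E_cont: "continuous_on UNIV (E v)" for v
    unfolding E_def by (intro continuous_intros cl_cont[THEN continuous_on_subset]) auto
  define g where "g v s = G s (E v s)" for v s
  have g_cont: "continuous_on {a..b} (g v)" for v unfolding g_def using cont[OF E_cont] .
  have g_int: "g v integrable_on {a..x}" if "x \<le> b" for v x
    using integrable_continuous_real[OF g_cont] that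
    by (metis atLeastatMost_subset_iff integrable_on_subinterval order_refl)
  define Pf where "Pf v t = exp (-L*(cl t - a)) *\<^sub>R (y0 + integral {a..cl t} (g v))" for v t
  have Pf_bc: "Pf v \<in> bcontfun" for v
  unfolding bcontfun_def mem_Collect_eq bounded_iff
  proof (intro conjI exI ballI)
    have c1: "continuous_on {a..b} (\<lambda>x. integral {a..x} (g v))"
      by (rule indefinite_integral_continuous_1[OF integrable_continuous_real[OF g_cont]])
    have "continuous_on UNIV (\<lambda>t. integral {a..cl t} (g v))"
      by (rule continuous_on_compose2[OF c1 cl_cont]) (use cl_in in auto)
    then show "continuous_on UNIV (Pf v)" unfolding Pf_def
      by (intro continuous_intros cl_cont[THEN continuous_on_subset]) auto
  next
    fix y assume "y \<in> range (Pf v)" then obtain t where yt: "y = Pf v t" by auto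
    have "norm (integral {a..cl t} (g v)) \<le> M * (cl t - a)"
    proof -
      have "norm (integral {a..cl t} (g v)) \<le> integral {a..cl t} (\<lambda>_. M)"
        apply (rule integral_norm_bound_integral)
        using g_int cl_in by (auto simp: g_def bnd)
      also have "\<dots> = M * (cl t - a)" using cl_in[of t] by simp
      finally show ?thesis .
    qed
    also have "\<dots> \<le> \<bar>M\<bar> * (cl t - a)" using cl_in[of t]
      by (intro mult_right_mono) auto
    also have "\<dots> \<le> \<bar>M\<bar> * (b - a)" using cl_in[of t]
      by (intro mult_left_mono) auto
    finally have i: "norm (integral {a..cl t} (g v)) \<le> \<bar>M\<bar> * (b - a)" .
    have e: "exp (-L*(cl t - a)) \<le> 1" using cl_in[of t] L by (auto simp: mult_nonneg_nonneg)
    have "norm (Pf v t) = exp (-L*(cl t - a)) * norm (y0 + integral {a..cl t} (g v))"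
      by (simp add: Pf_def)
    also have "\<dots> \<le> 1 * (norm y0 + \<bar>M\<bar> * (b - a))"
      apply (rule mult_mono[OF e])
      using i norm_triangle_ineq[of y0 "integral {a..cl t} (g v)"] by auto
    finally show "norm y \<le> norm y0 + \<bar>M\<bar> * (b - a)" using yt by simp
  qed
  define P where "P v = Bcontfun (Pf v)" for v
  have P_app: "apply_bcontfun (P v) = Pf v" for v
    unfolding P_def using Pf_bc by (simp add: Bcontfun_inverse)
  define c where "c = 1 - exp (-L*(b-a))"
  have c0: "0 \<le> c" "c < 1" unfolding c_def using L ab by auto
  have contr: "dist (P v) (P w) \<le> c * dist v w" for v w
  proof (rule dist_bound)
    fix t
    let ?x = "cl t"
    have ax: "a \<le> ?x" "?x \<le> b" using cl_in[of t] by auto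
    have "norm (integral {a..?x} (g v) - integral {a..?x} (g w)) = norm (integral {a..?x} (\<lambda>s. g v s - g w s))"
      using g_int[OF ax(2)] by (simp add: integral_diff)
    also have "\<dots> \<le> integral {a..?x} (\<lambda>s. dist v w * (L * exp (L*(s-a))))"
    proof (rule integral_norm_bound_integral)
      show "(\<lambda>s. g v s - g w s) integrable_on {a..?x}" using g_int[OF ax(2)] by (intro integrable_diff)
      show "(\<lambda>s. dist v w * (L * exp (L * (s - a)))) integrable_on {a..?x}"
        by (intro integrable_continuous_real continuous_intros)
      fix s assume s: "s \<in> {a..?x}"
      then have cs: "cl s = s" using ax by (auto simp: cl_def)
      have "norm (g v s - g w s) \<le> L * norm (E v s - E w s)" unfolding g_def by (rule lip)
      also have "E v s - E w s = exp (L*(s-a)) *\<^sub>R (apply_bcontfun v s - apply_bcontfun w s)"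
        by (simp add: E_def cs scaleR_diff_right)
      also have "L * norm \<dots> = L * exp (L*(s-a)) * dist (apply_bcontfun v s) (apply_bcontfun w s)"
        by (simp add: dist_norm)
      also have "\<dots> \<le> L * exp (L*(s-a)) * dist v w"
        using L by (intro mult_left_mono dist_bounded) auto
      finally show "norm (g v s - g w s) \<le> dist v w * (L * exp (L * (s - a)))" by (simp add: algebra_simps)
    qed
    also have "\<dots> = dist v w * (exp (L*(?x-a)) - 1)"
      using exp_int_formula[OF ax(1), of L] by simp
    finally have i: "norm (integral {a..?x} (g v) - integral {a..?x} (g w)) \<le> dist v w * (exp (L*(?x-a)) - 1)" .
    have "dist (apply_bcontfun (P v) t) (apply_bcontfun (P w) t)
        = exp (-L*(?x - a)) * norm (integral {a..?x} (g v) - integral {a..?x} (g w))"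
      by (simp add: P_app Pf_def dist_norm flip: scaleR_diff_right)
    also have "\<dots> \<le> exp (-L*(?x - a)) * (dist v w * (exp (L*(?x-a)) - 1))"
      by (rule mult_left_mono[OF i]) simp
    also have "\<dots> = dist v w * (1 - exp (-L*(?x - a)))"
      by (simp add: algebra_simps flip: exp_add)
    also have "\<dots> \<le> dist v w * c"
      unfolding c_def using ax L by (intro mult_left_mono) (auto simp: mult_left_mono)
    finally show "dist (apply_bcontfun (P v) t) (apply_bcontfun (P w) t) \<le> c * dist v w"
      by (simp add: mult.commute)
  qed
  obtain v where fixv: "P v = v" using banach_fix_type[OF c0, of P] contr by blast
  define x where "x = E v"
  have xeq: "x t = y0 + integral {a..t} (g v)" if "t \<in> {a..b}" for t
  proof -
    have "apply_bcontfun v t = Pf v t" using fixv P_app by metis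
    then show ?thesis unfolding x_def E_def Pf_def cl_id[OF that]
      by (simp add: exp_minus_inverse flip: exp_add)
  qed
  have gx: "g v s = G s (x s)" for s by (simp add: g_def x_def)
  show ?thesis
  proof (intro exI conjI ballI)
    show "continuous_on {a..b} x" unfolding x_def using E_cont by (rule continuous_on_subset) auto
    show "x a = y0" using xeq[of a] ab by simp
    fix t assume t: "t \<in> {a<..<b}"
    have d: "((\<lambda>u. y0 + integral {a..u} (g v)) has_vector_derivative g v t) (at t within {a..b})"
      using integral_has_vector_derivative[OF g_cont, of t] t
      by (auto intro!: derivative_eq_intros)
    have d2: "((\<lambda>u. y0 + integral {a..u} (g v)) has_vector_derivative g v t) (at t)"
      using d t by (simp add: at_within_Icc_at)
    have "(x has_vector_derivative g v t) (at t)"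
      by (rule has_vector_derivative_transform_within_open[OF d2, of "{a<..<b}"])
        (use t xeq in auto)
    then show "(x has_vector_derivative G t (x t)) (at t)" by (simp add: gx)
  qed
qed


locale baseloc =
  fixes A \<beta>0 \<sigma> g p T bM :: real and b :: "real \<Rightarrow> real"
  assumes A: "0 < A" and \<beta>0: "0 < \<beta>0" and \<sigma>: "0 \<le> \<sigma>" and gg: "0 \<le> g" and cpos: "0 < \<sigma> + g"
    and p0: "0 \<le> p" and p1: "p < 1" and T: "0 < T"
    and bcont: "continuous_on UNIV b" and blo: "\<And>t. \<beta>0 \<le> b t" and bhi: "\<And>t. b t \<le> bM"
begin

definition "c = \<sigma> + g"
definition "F = si_field b A \<sigma> g"

lemma c: "c > 0" using cpos by (simp add: c_def)
lemma bM: "bM \<ge> \<beta>0" using blo[of 0] bhi[of 0] by simp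
lemma F_simps: "F t z = (fst z*(A - fst z) - b t * snd z * fst z, b t * snd z * fst z - c * snd z)"
  by (simp add: F_def si_field_def c_def)

lemma b_cont_on: "continuous_on S b" using bcont by (rule continuous_on_subset) auto

context
  fixes y :: "real \<Rightarrow> real \<times> real" and a t1 :: real
  assumes at1: "a \<le> t1" and cy: "continuous_on {a..t1} y"
    and dy: "\<And>r. r \<in> {a<..<t1} \<Longrightarrow> (y has_vector_derivative F r (y r)) (at r)"
begin

lemma dS: "r \<in> {a<..<t1} \<Longrightarrow> ((\<lambda>r. fst (y r)) has_real_derivative
    (fst (y r)*(A - fst (y r)) - b r * snd (y r) * fst (y r))) (at r)"
  using vd_fst[OF dy] by (simp add: F_simps)

lemma dI: "r \<in> {a<..<t1} \<Longrightarrow> ((\<lambda>r. snd (y r)) has_real_derivative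
    (b r * snd (y r) * fst (y r) - c * snd (y r))) (at r)"
  using vd_snd[OF dy] by (simp add: F_simps)

lemma cS: "continuous_on {a..t1} (\<lambda>r. fst (y r))" using cy by (intro continuous_intros)
lemma cI: "continuous_on {a..t1} (\<lambda>r. snd (y r))" using cy by (intro continuous_intros)

lemma I_upper:
  fixes \<phi> \<psi> :: "real \<Rightarrow> real"
  assumes cphi: "continuous_on {a..t1} \<phi>"
    and dphi: "\<And>r. r \<in> {a<..<t1} \<Longrightarrow> (\<phi> has_real_derivative \<psi> r) (at r)"
    and le: "\<And>r. r \<in> {a<..<t1} \<Longrightarrow> b r * fst (y r) - c \<le> \<psi> r"
  shows "(snd (y t1))^2 * exp (-2*\<phi> t1) \<le> (snd (y a))^2 * exp (-2*\<phi> a)"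
proof (rule mono_le[OF at1])
  show "continuous_on {a..t1} (\<lambda>r. (snd (y r))^2 * exp (-2*\<phi> r))"
    using cy cphi by (intro continuous_intros)
  fix r assume r: "a < r" "r < t1"
  show "((\<lambda>r. (snd (y r))^2 * exp (-2*\<phi> r)) has_real_derivative
     (2 * (snd (y r))^2 * exp (-2*\<phi> r) * ((b r * fst (y r) - c) - \<psi> r))) (at r)"
    using r by (auto intro!: derivative_eq_intros dI dphi simp: algebra_simps power2_eq_square)
  have "(b r * fst (y r) - c) - \<psi> r \<le> 0" using le r by auto
  then show "2 * (snd (y r))^2 * exp (-2*\<phi> r) * ((b r * fst (y r) - c) - \<psi> r) \<le> 0"
    by (simp add: mult_nonneg_nonpos)
qed

lemma I_lower:
  fixes \<phi> \<psi> :: "real \<Rightarrow> real"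
  assumes cphi: "continuous_on {a..t1} \<phi>"
    and dphi: "\<And>r. r \<in> {a<..<t1} \<Longrightarrow> (\<phi> has_real_derivative \<psi> r) (at r)"
    and le: "\<And>r. r \<in> {a<..<t1} \<Longrightarrow> b r * fst (y r) - c \<ge> \<psi> r"
  shows "(snd (y t1))^2 * exp (-2*\<phi> t1) \<ge> (snd (y a))^2 * exp (-2*\<phi> a)"
proof (rule mono_ge[OF at1])
  show "continuous_on {a..t1} (\<lambda>r. (snd (y r))^2 * exp (-2*\<phi> r))"
    using cy cphi by (intro continuous_intros)
  fix r assume r: "a < r" "r < t1"
  show "((\<lambda>r. (snd (y r))^2 * exp (-2*\<phi> r)) has_real_derivative
     (2 * (snd (y r))^2 * exp (-2*\<phi> r) * ((b r * fst (y r) - c) - \<psi> r))) (at r)"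
    using r by (auto intro!: derivative_eq_intros dI dphi simp: algebra_simps power2_eq_square)
  have "(b r * fst (y r) - c) - \<psi> r \<ge> 0" using le r by auto
  then show "2 * (snd (y r))^2 * exp (-2*\<phi> r) * ((b r * fst (y r) - c) - \<psi> r) \<ge> 0"
    by simp
qed


end

lemma seg_of_imp:
  assumes sol: "impulsive_solution F (si_jump p) T x"
  obtains L where "continuous_on {real k*T..real k*T+T} (x(real k*T+T:=L))"
    "\<And>r. r \<in> {real k*T<..<real k*T+T} \<Longrightarrow> ((x(real k*T+T:=L)) has_vector_derivative F r ((x(real k*T+T:=L)) r)) (at r)"
    "(x(real k*T+T:=L)) (real k*T) = x (real k*T)"
    "(x(real k*T+T:=L)) (real k*T+T) = L"
    "x (real (Suc k)*T) = si_jump p L"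
proof -
  have e: "real (Suc k) * T = real k*T+T" by (simp add: algebra_simps)
  obtain L where c: "continuous_on {real k*T..<real k*T+T} x"
    and d: "\<And>r. r \<in> {real k*T<..<real k*T+T} \<Longrightarrow> (x has_vector_derivative F r (x r)) (at r)"
    and l: "(x \<longlongrightarrow> L) (at_left (real k*T+T))" and j: "x (real k*T+T) = si_jump p L"
    using sol[unfolded impulsive_solution_def, THEN spec[of _ k], unfolded e] by blast
  show ?thesis
  proof
    show "continuous_on {real k*T..real k*T+T} (x(real k*T+T:=L))"
      by (rule extend_closed[OF _ c l]) (use T in simp)
    fix r assume r: "r \<in> {real k*T<..<real k*T+T}"
    have "(x has_vector_derivative F r ((x(real k*T+T:=L)) r)) (at r)" using d[OF r] r by simp
    then show "((x(real k*T+T:=L)) has_vector_derivative F r ((x(real k*T+T:=L)) r)) (at r)"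
      by (rule has_vector_derivative_transform_within_open[of _ _ _ "{real k*T<..<real k*T+T}"]) (use r in auto)
  qed (use T j e in auto)
qed

end

locale sysloc = baseloc +
  assumes Kpos: "exp (A*T)*(1-p) > 1"
begin

definition "Ke = exp (A*T)*(1-p) - 1"
definition "us s = (Ke + p*exp (A*(T-s)))/(A*Ke)"
definition "u0 = us 0"
definition "umin = (1-p)*u0/2"
definition "umax = 2*u0"
definition "M1 = bM/umin + c"
definition "C2 = T*exp (A*T)*bM*exp (M1*T)*umax"
 definition "gq y a r = exp (A*(r-a)) * (1/fst (y r) - us (r-a))"
definition "BoxS = {z::real\<times>real. 1/umax \<le> fst z \<and> fst z \<le> 1/umin \<and> \<bar>snd z\<bar> \<le> 1}"

lemma Ke: "Ke > 0" using Kpos by (simp add: Ke_def)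
lemma u0_eq: "u0 = (exp (A*T) - 1)/(A*Ke)"
  by (simp add: u0_def us_def Ke_def algebra_simps)
lemma u0: "u0 > 0" using A T Ke by (simp add: u0_eq)
lemma usT: "us T = (1-p)*u0"
  by (simp add: u0_eq us_def Ke_def field_simps)
lemma us_pos: "us s > 0" using A Ke p0 by (simp add: us_def add_pos_nonneg)
lemma us_le: "0 \<le> s \<Longrightarrow> us s \<le> u0"
  using A Ke p0 by (simp add: u0_def us_def divide_right_mono mult_left_mono)
lemma us_ge: assumes "s \<le> T" shows "us s \<ge> (1-p)*u0"
proof -
  have "1 \<le> exp (A*(T-s))" using A assms by simp
  then have "p \<le> p * exp (A*(T-s))" using p0 by (metis mult.right_neutral mult_left_mono)
  then show ?thesis unfolding usT[symmetric] us_def using A Ke by (simp add: divide_right_mono)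
qed
lemma us_deriv: "(us has_real_derivative (- A * us s + 1)) (at s)"
  unfolding us_def using A Ke
  by (auto intro!: derivative_eq_intros simp: field_simps)
lemma umin: "umin > 0" using p1 u0 by (simp add: umin_def)
lemma umax: "umax > 0" using u0 by (simp add: umax_def)
lemma M1: "M1 > 0" using umin bM \<beta>0 c by (simp add: M1_def add_pos_pos)
lemma C2: "C2 > 0" using T bM \<beta>0 umax by (simp add: C2_def)



context
  fixes y :: "real \<Rightarrow> real \<times> real" and a t1 :: real
  assumes at1: "a \<le> t1" and cy: "continuous_on {a..t1} y"
    and dy: "\<And>r. r \<in> {a<..<t1} \<Longrightarrow> (y has_vector_derivative F r (y r)) (at r)"
begin
lemma gq_deriv:
  assumes "r \<in> {a<..<t1}" "fst (y r) \<noteq> 0"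
  shows "(gq y a has_real_derivative exp (A*(r-a)) * (b r * snd (y r) / fst (y r))) (at r)"
proof -
  have "(gq y a has_real_derivative
      exp (A*(r-a)) * A * (1/fst (y r) - us (r-a)) +
      exp (A*(r-a)) * (- ((fst (y r)*(A - fst (y r)) - b r * snd (y r) * fst (y r)) / (fst (y r))^2)
         - (- A * us (r-a) + 1))) (at r)"
    unfolding gq_def using assms
    by (auto intro!: derivative_eq_intros dS[OF at1 cy dy] DERIV_chain2[OF us_deriv]
        simp: power2_eq_square) (simp_all add: field_simps)
  moreover have "exp (A*(r-a)) * A * (1/fst (y r) - us (r-a)) +
      exp (A*(r-a)) * (- ((fst (y r)*(A - fst (y r)) - b r * snd (y r) * fst (y r)) / (fst (y r))^2)
         - (- A * us (r-a) + 1)) = exp (A*(r-a)) * (b r * snd (y r) / fst (y r))"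
    using assms(2) by (simp add: field_simps power2_eq_square)
  ultimately show ?thesis by simp
qed

end

lemma exp_shift: "X * exp (-e) \<le> Y \<Longrightarrow> X \<le> Y * exp (e::real)"
  by (simp add: exp_minus field_simps)
lemma exp_shift2: "X * exp e \<ge> Y \<Longrightarrow> Y * exp (-e) \<le> (X::real)"
  by (simp add: exp_minus field_simps)
lemma sq_exp: "(x * exp (e::real))^2 = x^2 * exp (2*e)"
  by (simp add: power_mult_distrib power2_eq_square flip: exp_add)

lemma box_facts:
  assumes "z \<in> BoxS"
  shows "fst z > 0" "1/fst z \<le> umax" "1/fst z \<ge> umin" "\<bar>snd z\<bar> \<le> 1"
    "b t * fst z - c \<le> M1" "b t * fst z - c \<ge> - M1"
proof -
  have z1: "1/umax \<le> fst z" and z2: "fst z \<le> 1/umin" and z3: "\<bar>snd z\<bar> \<le> 1"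
    using assms by (auto simp: BoxS_def)
  show pos: "fst z > 0" using z1 umax by (meson less_le_trans zero_less_divide_1_iff)
  show "1/fst z \<le> umax" using z1 umax pos by (simp add: field_simps)
  show "1/fst z \<ge> umin" using z2 umin pos by (simp add: field_simps)
  show "\<bar>snd z\<bar> \<le> 1" by (rule z3)
  have "b t * fst z \<le> bM * (1/umin)"
    using pos z2 bhi[of t] blo[of t] \<beta>0 by (intro mult_mono) auto
  then show "b t * fst z - c \<le> M1" using c by (simp add: M1_def)
  have "b t * fst z \<ge> 0" using pos blo[of t] \<beta>0 by simp
  moreover have "bM/umin \<ge> 0" using umin bM \<beta>0 by simp
  ultimately show "b t * fst z - c \<ge> - M1" using c by (simp add: M1_def)
qed

lemma est_I:
  assumes at1: "a \<le> t1" and cy: "continuous_on {a..t1} y"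
    and dy: "\<And>r. r \<in> {a<..<t1} \<Longrightarrow> (y has_vector_derivative F r (y r)) (at r)"
    and box: "\<And>r. r \<in> {a..t1} \<Longrightarrow> y r \<in> BoxS"
  shows "\<bar>snd (y t1)\<bar> \<le> \<bar>snd (y a)\<bar> * exp (M1*(t1-a))"
    "\<bar>snd (y a)\<bar> \<le> \<bar>snd (y t1)\<bar> * exp (M1*(t1-a))"
proof -
  have "(snd (y t1))^2 * exp (-2*(M1*(t1-a))) \<le> (snd (y a))^2 * exp (-2*(M1*(a-a)))"
    by (rule I_upper[OF at1 cy dy, of "\<lambda>r. M1*(r-a)" "\<lambda>_. M1"])
      (auto intro!: continuous_intros derivative_eq_intros box_facts(5)[OF box])
  then have "(snd (y t1))^2 * exp (-(2*(M1*(t1-a)))) \<le> (snd (y a))^2" by simp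
  then have "(snd (y t1))^2 \<le> (snd (y a))^2 * exp (2*(M1*(t1-a)))" by (rule exp_shift)
  then have "(snd (y t1))^2 \<le> ((snd (y a)) * exp (M1*(t1-a)))^2" by (simp add: sq_exp)
  then show "\<bar>snd (y t1)\<bar> \<le> \<bar>snd (y a)\<bar> * exp (M1*(t1-a))"
    using abs_le_square_iff[of "snd (y t1)" "snd (y a) * exp (M1*(t1-a))"] by (simp add: abs_mult)
  have "(snd (y t1))^2 * exp (-2*(-M1*(t1-a))) \<ge> (snd (y a))^2 * exp (-2*(-M1*(a-a)))"
    by (rule I_lower[OF at1 cy dy, of "\<lambda>r. -M1*(r-a)" "\<lambda>_. -M1"])
      (auto intro!: continuous_intros derivative_eq_intros box_facts(6)[OF box])
  then have "(snd (y t1))^2 * exp (2*(M1*(t1-a))) \<ge> (snd (y a))^2" by simp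
  then have "(snd (y a))^2 \<le> ((snd (y t1)) * exp (M1*(t1-a)))^2" by (simp add: sq_exp)
  then show "\<bar>snd (y a)\<bar> \<le> \<bar>snd (y t1)\<bar> * exp (M1*(t1-a))"
    using abs_le_square_iff[of "snd (y a)" "snd (y t1) * exp (M1*(t1-a))"] by (simp add: abs_mult)
qed

lemma est_u:
  assumes at1: "a \<le> t1" and t1T: "t1 \<le> a + T" and cy: "continuous_on {a..t1} y"
    and dy: "\<And>r. r \<in> {a<..<t1} \<Longrightarrow> (y has_vector_derivative F r (y r)) (at r)"
    and box: "\<And>r. r \<in> {a..t1} \<Longrightarrow> y r \<in> BoxS"
  shows "\<bar>gq y a t1 - gq y a a\<bar> \<le> C2 * \<bar>snd (y a)\<bar>"
proof -
  define B where "B = exp (A*T) * bM * (\<bar>snd (y a)\<bar> * exp (M1*T)) * umax"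
  have BT: "B * T = C2 * \<bar>snd (y a)\<bar>" by (simp add: B_def C2_def)
  have B0: "B \<ge> 0" using bM \<beta>0 umax by (simp add: B_def)
  have Spos: "fst (y r) > 0" if "r \<in> {a..t1}" for r using box_facts(1)[OF box[OF that]] .
  have cg: "continuous_on {a..t1} (gq y a)"
    unfolding gq_def us_def using cy Spos A Ke
    by (intro continuous_intros) (auto, fastforce)
  have dg: "(gq y a has_real_derivative exp (A*(r-a)) * (b r * snd (y r) / fst (y r))) (at r)"
    if "r \<in> {a<..<t1}" for r
  proof -
    have "fst (y r) > 0" using Spos that by auto
    then show ?thesis using gq_deriv[OF at1 cy dy that] by simp
  qed
  have bd: "\<bar>exp (A*(r-a)) * (b r * snd (y r) / fst (y r))\<bar> \<le> B" if r: "r \<in> {a<..<t1}" for r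
  proof -
    have r1: "a \<le> r" "r \<le> t1" using r by auto
    have cr: "continuous_on {a..r} y" using cy by (rule continuous_on_subset) (use r1 in auto)
    have Ir: "\<bar>snd (y r)\<bar> \<le> \<bar>snd (y a)\<bar> * exp (M1*(r-a))"
      by (rule est_I(1)[OF r1(1) cr]) (use dy box r1 in auto)
    also have "\<dots> \<le> \<bar>snd (y a)\<bar> * exp (M1*T)"
      using r1 t1T M1 by (intro mult_left_mono) auto
    finally have Ir': "\<bar>snd (y r)\<bar> \<le> \<bar>snd (y a)\<bar> * exp (M1*T)" .
    have e1: "exp (A*(r-a)) \<le> exp (A*T)" using r1 t1T A by auto
    have S1: "1 / fst (y r) \<le> umax" using box_facts(2)[OF box] r1 by auto
    have Sp: "fst (y r) > 0" using Spos r1 by auto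
    have "\<bar>exp (A*(r-a)) * (b r * snd (y r) / fst (y r))\<bar>
        = exp (A*(r-a)) * b r * \<bar>snd (y r)\<bar> * (1 / fst (y r))"
      using Sp blo[of r] \<beta>0 by (simp add: abs_mult)
    also have "\<dots> \<le> exp (A*T) * bM * (\<bar>snd (y a)\<bar> * exp (M1*T)) * umax"
      using e1 bhi[of r] blo[of r] \<beta>0 Ir' S1 Sp
      by (intro mult_mono) auto
    finally show ?thesis by (simp add: B_def)
  qed
  have "gq y a t1 - B*(t1-a) \<le> gq y a a - B*(a-a)"
    apply (rule mono_le[OF at1, of _ "\<lambda>r. exp (A*(r-a)) * (b r * snd (y r) / fst (y r)) - B"])
    using cg apply (intro continuous_intros; simp)
    using dg apply (auto intro!: derivative_eq_intros)[1]
    using bd by (smt (verit) greaterThanLessThan_iff)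
  moreover have "gq y a t1 + B*(t1-a) \<ge> gq y a a + B*(a-a)"
    apply (rule mono_ge[OF at1, of _ "\<lambda>r. exp (A*(r-a)) * (b r * snd (y r) / fst (y r)) + B"])
    using cg apply (intro continuous_intros; simp)
    using dg apply (auto intro!: derivative_eq_intros)[1]
    using bd by (smt (verit) greaterThanLessThan_iff)
  moreover have "B*(t1-a) \<le> B*T" using B0 t1T by (intro mult_left_mono) auto
  ultimately show ?thesis using BT by auto
qed

definition "\<delta>0 = (1-p)*u0/8"
definition "\<eta>0 = min (1/(2*exp (M1*T))) ((1-p)*u0/(8*C2))"
definition "lo2 = 3*(1-p)*u0/4"
definition "hi2 = u0 + (1-p)*u0/4"
definition "R2 = {z::real\<times>real. 1/hi2 \<le> fst z \<and> fst z \<le> 1/lo2 \<and> \<bar>snd z\<bar> \<le> 1/2}"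
definition "Ro = {z::real\<times>real. 1/umax < fst z \<and> fst z < 1/umin \<and> \<bar>snd z\<bar> < 1}"

lemma \<delta>0: "\<delta>0 > 0" using p1 u0 by (simp add: \<delta>0_def)
lemma \<eta>0: "\<eta>0 > 0" using p1 u0 C2 by (simp add: \<eta>0_def)
lemma \<eta>0_le1: "\<eta>0 * exp (M1*T) \<le> 1/2"
proof -
  have "\<eta>0 \<le> 1/(2*exp (M1*T))" by (simp add: \<eta>0_def)
  then show ?thesis by (simp add: field_simps)
qed
lemma \<eta>0_le2: "C2 * \<eta>0 \<le> (1-p)*u0/8"
proof -
  have "\<eta>0 \<le> (1-p)*u0/(8*C2)" by (simp add: \<eta>0_def)
  then show ?thesis using C2 by (simp add: field_simps)
qed
lemma lo2: "lo2 > 0" using p1 u0 by (simp add: lo2_def)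
lemma hi2: "hi2 > 0" using p1 u0 by (simp add: hi2_def add_pos_nonneg)

lemma R2_Ro: "R2 \<subseteq> Ro"
proof
  fix z assume z: "z \<in> R2"
  have "umin < lo2" using p1 u0 by (simp add: umin_def lo2_def)
  then have "1/lo2 < 1/umin" using umin by (simp add: frac_less2)
  moreover have "hi2 < umax" using p1 p0 u0 by (simp add: umax_def hi2_def)
  then have "1/umax < 1/hi2" using hi2 by (simp add: frac_less2)
  ultimately show "z \<in> Ro" using z by (auto simp: R2_def Ro_def)
qed
lemma Ro_Box: "Ro \<subseteq> BoxS" by (auto simp: Ro_def BoxS_def)
lemma R2_closed: "closed R2"
  unfolding R2_def by (intro closed_Collect_conj closed_Collect_le continuous_intros)
lemma Ro_open: "open Ro"
  unfolding Ro_def by (intro open_Collect_conj open_Collect_less continuous_intros)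

lemma in_R2:
  assumes at: "a \<le> t" "t \<le> a + T" and cy: "continuous_on {a..t} y"
    and dy: "\<And>r. r \<in> {a<..<t} \<Longrightarrow> (y has_vector_derivative F r (y r)) (at r)"
    and box: "\<And>r. r \<in> {a..t} \<Longrightarrow> y r \<in> BoxS"
    and hu: "\<bar>1/fst (y a) - u0\<bar> \<le> \<delta>0" and hi: "\<bar>snd (y a)\<bar> \<le> \<eta>0"
  shows "y t \<in> R2"
proof -
  have "\<bar>snd (y t)\<bar> \<le> \<bar>snd (y a)\<bar> * exp (M1*(t-a))"
    by (rule est_I(1)[OF at(1) cy dy box])
  also have "\<dots> \<le> \<eta>0 * exp (M1*T)"
    using hi at M1 by (intro mult_mono) auto
  finally have I2: "\<bar>snd (y t)\<bar> \<le> 1/2" using \<eta>0_le1 by simp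
  have "\<bar>gq y a t - gq y a a\<bar> \<le> C2 * \<bar>snd (y a)\<bar>"
    by (rule est_u[OF at cy dy box])
  also have "\<dots> \<le> C2 * \<eta>0" using hi C2 by (intro mult_left_mono) auto
  finally have g1: "\<bar>gq y a t - gq y a a\<bar> \<le> (1-p)*u0/8" using \<eta>0_le2 by simp
  have ga: "gq y a a = 1/fst (y a) - u0" by (simp add: gq_def u0_def)
  have "\<bar>gq y a t\<bar> \<le> (1-p)*u0/4" using g1 hu ga unfolding \<delta>0_def by linarith
  moreover have "\<bar>1/fst (y t) - us (t-a)\<bar> \<le> \<bar>gq y a t\<bar>"
  proof -
    have e1: "1 \<le> exp (A*(t-a))" using A at by simp
    have "\<bar>gq y a t\<bar> = exp (A*(t-a)) * \<bar>1/fst (y t) - us (t-a)\<bar>" by (simp add: gq_def abs_mult)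
    moreover have "1 * \<bar>1/fst (y t) - us (t-a)\<bar> \<le> exp (A*(t-a)) * \<bar>1/fst (y t) - us (t-a)\<bar>"
      by (rule mult_right_mono[OF e1]) simp
    ultimately show ?thesis by simp
  qed
  ultimately have u1: "\<bar>1/fst (y t) - us (t-a)\<bar> \<le> (1-p)*u0/4" by simp
  have "us (t-a) \<le> u0" "us (t-a) \<ge> (1-p)*u0" using us_le us_ge at by auto
  then have ul: "lo2 \<le> 1/fst (y t)" and uh: "1/fst (y t) \<le> hi2"
    using u1 unfolding lo2_def hi2_def by linarith+
  then have Sp: "fst (y t) > 0" using lo2 by (meson less_le_trans zero_less_divide_1_iff)
  have "1/hi2 \<le> fst (y t)" using uh Sp hi2 by (simp add: field_simps)
  moreover have "fst (y t) \<le> 1/lo2" using ul Sp lo2 by (simp add: field_simps)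
  ultimately show ?thesis using I2 by (simp add: R2_def)
qed

lemma stay_box:
  fixes G :: "real \<Rightarrow> real \<times> real \<Rightarrow> real \<times> real"
  assumes GF: "\<And>t z. z \<in> BoxS \<Longrightarrow> G t z = F t z"
    and cy: "continuous_on {a..a+T} y"
    and dy: "\<And>r. r \<in> {a<..<a+T} \<Longrightarrow> (y has_vector_derivative G r (y r)) (at r)"
    and hS: "fst (y a) > 0" and hu: "\<bar>1/fst (y a) - u0\<bar> \<le> \<delta>0" and hi: "\<bar>snd (y a)\<bar> \<le> \<eta>0"
  shows "\<forall>r\<in>{a..a+T}. y r \<in> Ro"
proof (rule ccontr)
  assume nt: "\<not> ?thesis"
  define E where "E = {a..a+T} \<inter> y -` (- Ro)"
  have Ene: "E \<noteq> {}" using nt by (auto simp: E_def)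
  have Ecl: "closed E" unfolding E_def
    by (rule continuous_closed_preimage[OF cy]) (use Ro_open in auto)
  have Ebd: "bdd_below E" by (auto simp: E_def bdd_below_def)
  define t1 where "t1 = Inf E"
  have t1E: "t1 \<in> E" using closed_contains_Inf[OF Ene Ebd Ecl] by (simp add: t1_def)
  have before: "y r \<in> Ro" if "a \<le> r" "r < t1" for r
  proof (rule ccontr)
    assume "y r \<notin> Ro"
    then have "r \<in> E" using that t1E by (auto simp: E_def)
    then have "t1 \<le> r" unfolding t1_def using Ebd by (rule cInf_lower)
    then show False using that by simp
  qed
  have ya: "y a \<in> R2"
  proof -
    have q: "(1-p)*u0 \<le> u0" "0 \<le> (1-p)*u0" using p0 p1 u0 by (auto simp: mult_le_cancel_right1)
    have "lo2 \<le> 1/fst (y a)" "1/fst (y a) \<le> hi2"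
      using hu q unfolding \<delta>0_def lo2_def hi2_def by linarith+
    then have "1/hi2 \<le> fst (y a)" "fst (y a) \<le> 1/lo2" using hS lo2 hi2 by (auto simp: field_simps)
    moreover have "\<bar>snd (y a)\<bar> \<le> 1/2"
    proof -
      have "1 \<le> exp (M1*T)" using M1 T by simp
      then have "\<eta>0 * 1 \<le> \<eta>0 * exp (M1*T)" using \<eta>0 by (intro mult_left_mono) auto
      then show ?thesis using hi \<eta>0_le1 by simp
    qed
    ultimately show ?thesis by (simp add: R2_def)
  qed
  have t1a: "a < t1"
  proof -
    have "a \<le> t1" using t1E by (auto simp: E_def)
    moreover have "t1 \<noteq> a" using t1E ya R2_Ro by (auto simp: E_def)
    ultimately show ?thesis by simp
  qed
  have t1T: "t1 \<le> a + T" using t1E by (auto simp: E_def)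
  have inR2: "y r \<in> R2" if r: "a \<le> r" "r < t1" for r
  proof (rule in_R2)
    show "a \<le> r" "r \<le> a + T" using r t1T by auto
    show "continuous_on {a..r} y" using cy by (rule continuous_on_subset) (use r t1T in auto)
    show box: "y r' \<in> BoxS" if "r' \<in> {a..r}" for r'
      using before[of r'] that r Ro_Box by auto
    fix r' assume r': "r' \<in> {a<..<r}"
    have "G r' (y r') = F r' (y r')" using GF box r' by auto
    then show "(y has_vector_derivative F r' (y r')) (at r')"
      using dy[of r'] r' r t1T by auto
  qed (use hu hi in auto)
  have "{a..<t1} \<subseteq> {a..t1} \<inter> y -` R2" using inR2 by auto
  moreover have "closed ({a..t1} \<inter> y -` R2)"
    by (rule continuous_closed_preimage) (use cy t1T R2_closed in \<open>auto intro: continuous_on_subset\<close>)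
  ultimately have "closure {a..<t1} \<subseteq> {a..t1} \<inter> y -` R2" by (rule closure_minimal)
  then have "y t1 \<in> R2" using t1a by (auto simp: subset_iff)
  then show False using t1E R2_Ro by (auto simp: E_def)
qed

definition "Phi a r = A*(r-a) + ln (Ke + p*exp (A*(T-(r-a))))"

lemma Phi_arg: "Ke + p*exp (A*(T-(r-a))) > 0" using Ke p0 by (simp add: add_pos_nonneg)

lemma Phi_deriv: "(Phi a has_real_derivative 1/us (r-a)) (at r)"
proof -
  have "(Phi a has_real_derivative A + (p*(exp (A*(T-(r-a))) * (- A)))/(Ke + p*exp (A*(T-(r-a))))) (at r)"
    unfolding Phi_def using Phi_arg[of r a]
    by (auto intro!: derivative_eq_intros)
  moreover have "A + (p*(exp (A*(T-(r-a))) * (- A)))/(Ke + p*exp (A*(T-(r-a)))) = 1/us (r-a)"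
    using Phi_arg[of r a] A Ke by (simp add: us_def field_simps)
  ultimately show ?thesis by simp
qed

lemma Phi_cont: "continuous_on S (Phi a)"
  unfolding Phi_def using Phi_arg by (intro continuous_intros) (metis less_irrefl)

lemma Phi_period: "Phi a (a+T) - Phi a a = A*T + ln (1-p)"
proof -
  have e: "Ke + p = (1-p)*(exp (A*T) - 1)" "Ke + p*exp (A*T) = exp (A*T) - 1"
    by (simp_all add: Ke_def algebra_simps)
  have pos: "exp (A*T) - 1 > 0" using A T by simp
  show ?thesis unfolding Phi_def using e pos p1 A T by (simp add: ln_mult)
qed

lemma u_dev:
  assumes at: "a \<le> t" "t \<le> a + T" and cy: "continuous_on {a..t} y"
    and dy: "\<And>r. r \<in> {a<..<t} \<Longrightarrow> (y has_vector_derivative F r (y r)) (at r)"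
    and box: "\<And>r. r \<in> {a..t} \<Longrightarrow> y r \<in> BoxS"
  shows "\<bar>1/fst (y t) - us (t-a)\<bar> \<le> \<bar>1/fst (y a) - u0\<bar> + C2*\<bar>snd (y a)\<bar>"
proof -
  have g: "\<bar>gq y a t - gq y a a\<bar> \<le> C2 * \<bar>snd (y a)\<bar>" by (rule est_u[OF at cy dy box])
  have ga: "gq y a a = 1/fst (y a) - u0" by (simp add: gq_def u0_def)
  have e1: "1 \<le> exp (A*(t-a))" using A at by simp
  have "\<bar>gq y a t\<bar> = exp (A*(t-a)) * \<bar>1/fst (y t) - us (t-a)\<bar>" by (simp add: gq_def abs_mult)
  moreover have "1 * \<bar>1/fst (y t) - us (t-a)\<bar> \<le> exp (A*(t-a)) * \<bar>1/fst (y t) - us (t-a)\<bar>"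
    by (rule mult_right_mono[OF e1]) simp
  moreover have "\<bar>gq y a t\<bar> \<le> \<bar>gq y a t - gq y a a\<bar> + \<bar>1/fst (y a) - u0\<bar>"
    using abs_triangle_ineq[of "gq y a t - gq y a a" "gq y a a"] by (simp add: ga)
  ultimately show ?thesis using g by linarith
qed

end


lemma exp_comb:
  fixes X Y p1 p0 d :: real
  assumes "X * exp (-2*p1) \<le> Y * exp (-2*p0)" "p1 - p0 = d"
  shows "X * exp (-2*d) \<le> Y"
proof -
  have "exp (-2*p1) = exp (-2*d) * exp (-2*p0)" using assms(2) by (simp add: algebra_simps flip: exp_add)
  then have "(X * exp (-2*d)) * exp (-2*p0) \<le> Y * exp (-2*p0)" using assms(1) by (simp add: algebra_simps)
  then show ?thesis by simp
qed

locale stabloc = sysloc +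
  fixes \<mu> db :: real
  assumes mu: "\<mu> > 0" and mueq: "\<beta>0*(A*T + ln (1-p)) - c*T = -2*\<mu>"
    and db: "\<And>t. b t - \<beta>0 \<le> db" and dbT: "db*T/umin \<le> \<mu>/2"
begin

definition "\<theta> = exp (-(A*T))/(1-p)"
definition "KK = 2*\<theta>*C2/(1-exp (-\<mu>)) + 1"
definition "\<rho> = max \<theta> ((1+exp (-\<mu>))/2)"
definition "r0 = min \<delta>0 (min \<eta>0 (\<mu>*umin*((1-p)*u0)/(2*\<beta>0*(1+C2)*T)))"
definition "Ly z = \<bar>1/fst z - u0\<bar> + KK*\<bar>snd z\<bar>"

lemma \<theta>: "\<theta> > 0" "\<theta> < 1"
proof -
  show "\<theta> > 0" using p1 by (simp add: \<theta>_def)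
  have "exp (-(A*T)) < 1-p" using Kpos by (simp add: exp_minus field_simps)
  then show "\<theta> < 1" using p1 by (simp add: \<theta>_def)
qed
lemma em: "exp (-\<mu>) < 1" "exp (-\<mu>) > 0" using mu by auto
lemma KK: "KK \<ge> 1"
  using \<theta> C2 em by (simp add: KK_def)
lemma \<rho>: "\<rho> < 1" "\<rho> > 0" using \<theta> em by (auto simp: \<rho>_def)
lemma r0: "r0 > 0" "r0 \<le> \<delta>0" "r0 \<le> \<eta>0"
  "\<beta>0*(r0 + C2*r0)*T/(umin*((1-p)*u0)) \<le> \<mu>/2"
proof -
  show "r0 > 0" using \<delta>0 \<eta>0 mu umin p1 u0 \<beta>0 C2 T by (simp add: r0_def)
  show "r0 \<le> \<delta>0" "r0 \<le> \<eta>0" by (auto simp: r0_def)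
  have "r0 \<le> \<mu>*umin*((1-p)*u0)/(2*\<beta>0*(1+C2)*T)" by (simp add: r0_def)
  moreover have pos: "umin*((1-p)*u0) > 0" "2*\<beta>0*(1+C2)*T > 0" using umin p1 u0 \<beta>0 C2 T by auto
  ultimately have "r0 * (2*\<beta>0*(1+C2)*T) \<le> \<mu>*umin*((1-p)*u0)"
    by (simp add: pos_le_divide_eq)
  then show "\<beta>0*(r0 + C2*r0)*T/(umin*((1-p)*u0)) \<le> \<mu>/2"
    using pos by (simp add: pos_divide_le_eq algebra_simps)
qed

lemma db0: "db \<ge> 0" using db[of 0] blo[of 0] by simp

lemma period_step:
  assumes cy: "continuous_on {a..a+T} y"
    and dy: "\<And>r. r \<in> {a<..<a+T} \<Longrightarrow> (y has_vector_derivative F r (y r)) (at r)"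
    and hS: "fst (y a) > 0" and hL: "Ly (y a) \<le> r0"
  shows "fst (si_jump p (y (a+T))) > 0" "Ly (si_jump p (y (a+T))) \<le> \<rho> * Ly (y a)"
    "\<forall>r\<in>{a..a+T}. y r \<in> Ro"
proof -
  define \<Delta> where "\<Delta> = \<bar>1/fst (y a) - u0\<bar>"
  define i where "i = \<bar>snd (y a)\<bar>"
  have Li: "Ly (y a) = \<Delta> + KK*i" by (simp add: Ly_def \<Delta>_def i_def)
  have \<Delta>0: "\<Delta> \<ge> 0" "i \<ge> 0" by (auto simp: \<Delta>_def i_def)
  have ir: "i \<le> r0" using hL Li KK \<Delta>0
    by (smt (verit) mult_le_cancel_right1 mult.commute)
  have \<Delta>r: "\<Delta> \<le> r0" using hL Li KK \<Delta>0 by (smt (verit) mult_nonneg_nonneg)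
  have inRo: "\<forall>r\<in>{a..a+T}. y r \<in> Ro"
    by (rule stay_box[of F, OF _ cy dy hS]) (use \<Delta>r ir r0 in \<open>auto simp: \<Delta>_def i_def\<close>)
  then show "\<forall>r\<in>{a..a+T}. y r \<in> Ro" .
  have box: "y r \<in> BoxS" if "r \<in> {a..a+T}" for r using inRo Ro_Box that by auto
  have aT: "a \<le> a + T" using T by simp
  have g: "\<bar>gq y a (a+T) - gq y a a\<bar> \<le> C2 * i"
    unfolding i_def by (rule est_u[OF aT _ cy dy box]) auto
  have ga: "gq y a a = 1/fst (y a) - u0" by (simp add: gq_def u0_def)
  have gT: "gq y a (a+T) = exp (A*T) * (1/fst (y (a+T)) - (1-p)*u0)"
    by (simp add: gq_def usT)
  have SaT: "fst (y (a+T)) > 0" using box_facts(1)[OF box, of "a+T"] T by simp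
  have jS: "fst (si_jump p (y (a+T))) = (1-p) * fst (y (a+T))" by (simp add: si_jump_def)
  show "fst (si_jump p (y (a+T))) > 0" using jS SaT p1 by simp
  have "1/fst (si_jump p (y (a+T))) - u0 = \<theta> * gq y a (a+T)"
    unfolding jS gT \<theta>_def using SaT p1 by (simp add: field_simps exp_minus)
  then have newu: "\<bar>1/fst (si_jump p (y (a+T))) - u0\<bar> \<le> \<theta> * (\<Delta> + C2*i)"
  proof -
    assume e: "1/fst (si_jump p (y (a+T))) - u0 = \<theta> * gq y a (a+T)"
    have "\<bar>gq y a (a+T)\<bar> \<le> \<Delta> + C2*i"
      using g ga abs_triangle_ineq[of "gq y a (a+T) - gq y a a" "gq y a a"] by (simp add: \<Delta>_def)
    then show ?thesis unfolding e abs_mult using \<theta> by (simp add: mult_left_mono)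
  qed
  define D where "D = db/umin + \<beta>0*(\<Delta> + C2*i)/(umin*((1-p)*u0))"
  have DT: "D*T \<le> \<mu>"
  proof -
    have "\<beta>0*(\<Delta> + C2*i)*T/(umin*((1-p)*u0)) \<le> \<beta>0*(r0 + C2*r0)*T/(umin*((1-p)*u0))"
    proof -
      have "\<Delta> + C2*i \<le> r0 + C2*r0" using \<Delta>r ir C2 by (intro add_mono mult_left_mono) auto
      then have "\<beta>0*(\<Delta> + C2*i)*T \<le> \<beta>0*(r0 + C2*r0)*T" using \<beta>0 T by simp
      moreover have "umin*((1-p)*u0) > 0" using umin p1 u0 by simp
      ultimately show ?thesis by (intro divide_right_mono) auto
    qed
    also have "\<dots> \<le> \<mu>/2" by (rule r0(4))
    finally have "\<beta>0*(\<Delta> + C2*i)*T/(umin*((1-p)*u0)) \<le> \<mu>/2" .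
    moreover have "D*T = db*T/umin + \<beta>0*(\<Delta> + C2*i)*T/(umin*((1-p)*u0))"
      by (simp add: D_def algebra_simps)
    ultimately show ?thesis using dbT by linarith
  qed
  have rate: "b r * fst (y r) - c \<le> \<beta>0 * (1/us (r-a)) - c + D" if r: "r \<in> {a<..<a+T}" for r
  proof -
    have rb: "r \<in> {a..a+T}" using r by auto
    have Sp: "fst (y r) > 0" and S1: "fst (y r) \<le> 1/umin" using box_facts(1) box[OF rb]
      by (auto simp: BoxS_def)
    have u1: "1/fst (y r) \<ge> umin" using box_facts(3)[OF box[OF rb]] .
    have usr: "us (r-a) \<ge> (1-p)*u0" using us_ge r by auto
    have dev: "\<bar>1/fst (y r) - us (r-a)\<bar> \<le> \<Delta> + C2*i"
      unfolding \<Delta>_def i_def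
      by (rule u_dev[of a r]) (use r cy dy box in \<open>auto intro: continuous_on_subset\<close>)
    have "(b r - \<beta>0) * fst (y r) \<le> db * (1/umin)"
      using db[of r] blo[of r] Sp S1 db0 by (intro mult_mono) auto
    moreover have "fst (y r) - 1/us (r-a) \<le> (\<Delta> + C2*i)/(umin*((1-p)*u0))"
    proof -
      have "fst (y r) - 1/us (r-a) = (us (r-a) - 1/fst (y r)) / ((1/fst (y r)) * us (r-a))"
        using Sp us_pos[of "r-a"] by (simp add: field_simps)
      also have "\<dots> \<le> \<bar>us (r-a) - 1/fst (y r)\<bar> / ((1/fst (y r)) * us (r-a))"
        using Sp us_pos[of "r-a"] by (intro divide_right_mono) auto
      also have "\<dots> \<le> (\<Delta> + C2*i) / ((1/fst (y r)) * us (r-a))"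
        using dev Sp us_pos[of "r-a"] by (intro divide_right_mono) (auto simp: abs_minus_commute)
      also have "\<dots> \<le> (\<Delta> + C2*i)/(umin*((1-p)*u0))"
        using u1 usr umin p1 u0 \<Delta>0 C2 Sp us_pos[of "r-a"]
        by (intro divide_left_mono mult_mono mult_pos_pos) auto
      finally show ?thesis .
    qed
    then have "\<beta>0 * (fst (y r) - 1/us (r-a)) \<le> \<beta>0 * ((\<Delta> + C2*i)/(umin*((1-p)*u0)))"
      using \<beta>0 by (intro mult_left_mono) auto
    ultimately show ?thesis by (simp add: D_def algebra_simps)
  qed
  have "(snd (y (a+T)))^2 * exp (-2*((\<beta>0 * Phi a (a+T) - c*(a+T-a) + D*(a+T-a))))
      \<le> (snd (y a))^2 * exp (-2*((\<beta>0 * Phi a a - c*(a-a) + D*(a-a))))"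
    by (rule I_upper[OF aT cy dy, of "\<lambda>r. \<beta>0 * Phi a r - c*(r-a) + D*(r-a)"
          "\<lambda>r. \<beta>0 * (1/us (r-a)) - c + D"])
      (auto intro!: continuous_intros derivative_eq_intros Phi_cont Phi_deriv, use rate in force)
  moreover have "(\<beta>0 * Phi a (a+T) - c*(a+T-a) + D*(a+T-a)) - (\<beta>0 * Phi a a - c*(a-a) + D*(a-a))
      = -2*\<mu> + D*T"
    using Phi_period[of a] mueq by (simp add: algebra_simps)
  ultimately have "(snd (y (a+T)))^2 * exp (-2*(-2*\<mu> + D*T)) \<le> (snd (y a))^2"
    by (rule exp_comb)
  then have "(snd (y (a+T)))^2 \<le> (snd (y a))^2 * exp (2*(-2*\<mu> + D*T))"
    by (intro exp_shift) simp
  also have "\<dots> \<le> (snd (y a))^2 * exp (2*(-\<mu>))"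
    using DT by (intro mult_left_mono) auto
  also have "\<dots> = (snd (y a) * exp (-\<mu>))^2" by (simp add: sq_exp)
  finally have "\<bar>snd (y (a+T))\<bar> \<le> \<bar>snd (y a) * exp (-\<mu>)\<bar>"
    using abs_le_square_iff by blast
  then have newI: "\<bar>snd (si_jump p (y (a+T)))\<bar> \<le> exp (-\<mu>) * i"
    by (simp add: si_jump_def abs_mult i_def mult.commute)
  have "Ly (si_jump p (y (a+T))) \<le> \<theta> * (\<Delta> + C2*i) + KK * (exp (-\<mu>) * i)"
    unfolding Ly_def using newu newI KK by (intro add_mono mult_left_mono) auto
  also have "\<dots> \<le> \<rho> * \<Delta> + \<rho> * (KK*i)"
  proof -
    have "\<theta> * \<Delta> \<le> \<rho> * \<Delta>" using \<Delta>0 by (intro mult_right_mono) (auto simp: \<rho>_def)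
    moreover have "\<theta>*C2 + KK*exp (-\<mu>) \<le> KK * ((1+exp (-\<mu>))/2)"
    proof -
      have "KK * (1 - exp (-\<mu>)) = 2*\<theta>*C2 + (1 - exp (-\<mu>))"
        using em by (simp add: KK_def field_simps)
      then have "2*\<theta>*C2 \<le> KK * (1 - exp (-\<mu>))" using em by simp
      then show ?thesis by (simp add: algebra_simps)
    qed
    then have "\<theta>*C2 + KK*exp (-\<mu>) \<le> \<rho> * KK"
      using KK by (smt (verit) \<rho>_def max.cobounded2 mult.commute mult_left_mono)
    then have "(\<theta>*C2 + KK*exp (-\<mu>)) * i \<le> (\<rho> * KK) * i" using \<Delta>0 by (intro mult_right_mono)
    ultimately show ?thesis by (simp add: algebra_simps)
  qed
  finally show "Ly (si_jump p (y (a+T))) \<le> \<rho> * Ly (y a)" by (simp add: Li algebra_simps)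
qed

definition "clampz z = (max (1/umax) (min (1/umin) (fst z)), max (-1) (min 1 (snd (z::real\<times>real))))"
definition "G t z = F t (clampz z)"

lemma umin_umax: "1/umax \<le> 1/umin"
proof -
  have "umin \<le> umax" using p0 p1 u0 by (simp add: umin_def umax_def)
  then show ?thesis using umin by (simp add: frac_le)
qed

lemma clamp_box: "clampz z \<in> BoxS"
  using umin_umax by (auto simp: clampz_def BoxS_def)

lemma clamp_id: "z \<in> BoxS \<Longrightarrow> clampz z = z"
  by (cases z) (auto simp: clampz_def BoxS_def)

lemma GF: "z \<in> BoxS \<Longrightarrow> G t z = F t z" by (simp add: G_def clamp_id)

lemma clamp_lip: "\<bar>fst (clampz z) - fst (clampz w)\<bar> \<le> \<bar>fst z - fst w\<bar>"
   "\<bar>snd (clampz z) - snd (clampz w)\<bar> \<le> \<bar>snd z - snd w\<bar>"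
  by (auto simp: clampz_def)

definition "bndS = 1/umin"
definition "L0 = A + 2*bndS + 2*bM*bndS + 2*bM + c"

lemma F_lip_box:
  assumes z: "z \<in> BoxS" and w: "w \<in> BoxS"
  shows "norm (F t z - F t w) \<le> L0 * (\<bar>fst z - fst w\<bar> + \<bar>snd z - snd w\<bar>)"
proof -
  obtain S1 I1 where zz: "z = (S1, I1)" by (cases z)
  obtain S2 I2 where ww: "w = (S2, I2)" by (cases w)
  have b1: "0 < S1" "S1 \<le> bndS" "\<bar>I1\<bar> \<le> 1" using box_facts[OF z] z by (auto simp: zz bndS_def BoxS_def)
  have b2: "0 < S2" "S2 \<le> bndS" "\<bar>I2\<bar> \<le> 1" using box_facts[OF w] w by (auto simp: ww bndS_def BoxS_def)
  have bt: "0 \<le> b t" "b t \<le> bM" using blo[of t] bhi[of t] \<beta>0 by auto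
  define dS where "dS = \<bar>S1 - S2\<bar>"
  define dI where "dI = \<bar>I1 - I2\<bar>"
  have IS: "\<bar>I1*S1 - I2*S2\<bar> \<le> dI*bndS + dS"
  proof -
    have "I1*S1 - I2*S2 = (I1 - I2)*S1 + I2*(S1 - S2)" by (simp add: algebra_simps)
    then have "\<bar>I1*S1 - I2*S2\<bar> \<le> \<bar>I1 - I2\<bar>*\<bar>S1\<bar> + \<bar>I2\<bar>*\<bar>S1 - S2\<bar>" by (simp add: abs_mult[symmetric] abs_triangle_ineq)
    also have "\<dots> \<le> dI*bndS + 1*dS" using b1 b2 unfolding dI_def dS_def
      by (intro add_mono mult_mono) auto
    finally show ?thesis by simp
  qed
  have SS: "\<bar>S1*(A-S1) - S2*(A-S2)\<bar> \<le> dS*(A + 2*bndS)"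
  proof -
    have "S1*(A-S1) - S2*(A-S2) = (S1 - S2)*(A - S1 - S2)" by (simp add: algebra_simps)
    moreover have "\<bar>A - S1 - S2\<bar> \<le> A + 2*bndS" using b1 b2 A by auto
    ultimately show ?thesis unfolding dS_def by (simp add: abs_mult mult_left_mono)
  qed
  have d1: "\<bar>fst (F t z - F t w)\<bar> \<le> dS*(A + 2*bndS) + bM*(dI*bndS + dS)"
  proof -
    have "fst (F t z - F t w) = (S1*(A-S1) - S2*(A-S2)) - b t * (I1*S1 - I2*S2)"
      by (simp add: F_simps zz ww algebra_simps)
    also have "\<bar>\<dots>\<bar> \<le> \<bar>S1*(A-S1) - S2*(A-S2)\<bar> + b t * \<bar>I1*S1 - I2*S2\<bar>"
      using abs_triangle_ineq4[of "S1*(A-S1) - S2*(A-S2)" "b t * (I1*S1 - I2*S2)"] bt by (simp add: abs_mult)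
    also have "\<dots> \<le> dS*(A + 2*bndS) + bM*(dI*bndS + dS)"
      using SS IS bt by (intro add_mono mult_mono) auto
    finally show ?thesis .
  qed
  have d2: "\<bar>snd (F t z - F t w)\<bar> \<le> bM*(dI*bndS + dS) + c*dI"
  proof -
    have "snd (F t z - F t w) = b t * (I1*S1 - I2*S2) - c*(I1 - I2)"
      by (simp add: F_simps zz ww algebra_simps)
    also have "\<bar>\<dots>\<bar> \<le> b t * \<bar>I1*S1 - I2*S2\<bar> + c*\<bar>I1 - I2\<bar>"
      using abs_triangle_ineq4[of "b t * (I1*S1 - I2*S2)" "c*(I1 - I2)"] bt c by (simp add: abs_mult)
    also have "\<dots> \<le> bM*(dI*bndS + dS) + c*dI"
      using IS bt c unfolding dI_def by (intro add_mono mult_mono) auto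
    finally show ?thesis .
  qed
  have "norm (F t z - F t w) \<le> dS*(A + 2*bndS) + bM*(dI*bndS + dS) + (bM*(dI*bndS + dS) + c*dI)"
    using norm_le_sum[of "F t z - F t w"] d1 d2 by linarith
  also have "\<dots> \<le> L0 * (dS + dI)"
  proof -
    have bndS: "bndS > 0" using umin by (simp add: bndS_def)
    have "dS*(A + 2*bndS) + bM*(dI*bndS + dS) + (bM*(dI*bndS + dS) + c*dI)
        = dS*(A + 2*bndS + 2*bM) + dI*(2*bM*bndS + c)" by (simp add: algebra_simps)
    also have "\<dots> \<le> dS*L0 + dI*L0"
    proof (rule add_mono)
      have "A + 2*bndS + 2*bM \<le> L0" unfolding L0_def using bndS bM \<beta>0 c by simp
      then show "dS*(A + 2*bndS + 2*bM) \<le> dS*L0" unfolding dS_def by (rule mult_left_mono) simp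
      have "2*bM*bndS + c \<le> L0" unfolding L0_def using bndS bM \<beta>0 c A by simp
      then show "dI*(2*bM*bndS + c) \<le> dI*L0" unfolding dI_def by (rule mult_left_mono) simp
    qed
    finally show ?thesis by (simp add: algebra_simps)
  qed
  finally show ?thesis by (simp add: zz ww dS_def dI_def)
qed

lemma L0: "L0 > 0" unfolding L0_def bndS_def using A umin bM \<beta>0 c by (simp add: add_pos_nonneg)

lemma G_lip: "norm (G t z - G t w) \<le> (2*L0) * norm (z - w)"
proof -
  have "norm (G t z - G t w) \<le> L0 * (\<bar>fst (clampz z) - fst (clampz w)\<bar> + \<bar>snd (clampz z) - snd (clampz w)\<bar>)"
    unfolding G_def by (rule F_lip_box[OF clamp_box clamp_box])
  also have "\<dots> \<le> L0 * (norm (z - w) + norm (z - w))"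
    using clamp_lip[of z w] abs_fst_le[of "z - w"] abs_snd_le[of "z - w"] L0
    by (intro mult_left_mono) auto
  finally show ?thesis by simp
qed

lemma G_bnd: "norm (G t z) \<le> bndS*(A + bndS) + 2*bM*bndS + c"
proof -
  have z: "clampz z \<in> BoxS" by (rule clamp_box)
  obtain S1 I1 where zz: "clampz z = (S1, I1)" by (cases "clampz z")
  have b1: "0 < S1" "S1 \<le> bndS" "\<bar>I1\<bar> \<le> 1" using box_facts[OF z] z by (auto simp: zz bndS_def BoxS_def)
  have bt: "0 \<le> b t" "b t \<le> bM" using blo[of t] bhi[of t] \<beta>0 by auto
  have "norm (G t z) \<le> \<bar>S1*(A-S1) - b t*I1*S1\<bar> + \<bar>b t*I1*S1 - c*I1\<bar>"
    using norm_le_sum[of "G t z"] by (simp add: G_def F_simps zz)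
  also have "\<dots> \<le> (S1*(A+S1) + bM*S1) + (bM*S1 + c)"
  proof (rule add_mono)
    have "\<bar>S1*(A-S1) - b t*I1*S1\<bar> \<le> S1*\<bar>A-S1\<bar> + b t*\<bar>I1\<bar>*S1"
      using b1 bt by (simp add: abs_mult abs_triangle_ineq4 [THEN order_trans])
    also have "\<dots> \<le> S1*(A+S1) + bM*1*S1" using b1 bt A by (intro add_mono mult_mono mult_left_mono) auto
    finally show "\<bar>S1*(A-S1) - b t*I1*S1\<bar> \<le> S1*(A+S1) + bM*S1" by simp
    have "\<bar>b t*I1*S1 - c*I1\<bar> \<le> b t*\<bar>I1\<bar>*S1 + c*\<bar>I1\<bar>"
      using b1 bt c by (simp add: abs_mult abs_triangle_ineq4 [THEN order_trans])
    also have "\<dots> \<le> bM*1*S1 + c*1" using b1 bt c by (intro add_mono mult_mono mult_left_mono) auto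
    finally show "\<bar>b t*I1*S1 - c*I1\<bar> \<le> bM*S1 + c" by simp
  qed
  also have "\<dots> \<le> bndS*(A + bndS) + 2*bM*bndS + c"
  proof -
    have "S1*(A+S1) \<le> bndS*(A+bndS)" using b1 A by (intro mult_mono) auto
    moreover have "bM*S1 \<le> bM*bndS" using b1 bM \<beta>0 by (intro mult_left_mono) auto
    ultimately show ?thesis by linarith
  qed
  finally show ?thesis .
qed

lemma G_cont: assumes "continuous_on UNIV x" shows "continuous_on {a..a'} (\<lambda>t. G t (x t))"
proof -
  have "continuous_on {a..a'} x" using assms by (rule continuous_on_subset) auto
  then show ?thesis unfolding G_def F_simps clampz_def
    by (intro continuous_intros b_cont_on)
qed

lemma exist_seg:
  assumes hS: "fst y0 > 0" and hL: "Ly y0 \<le> r0"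
  shows "\<exists>y. continuous_on {a..a+T} y \<and> y a = y0 \<and>
     (\<forall>r\<in>{a<..<a+T}. (y has_vector_derivative F r (y r)) (at r))"
proof -
  obtain y where cy: "continuous_on {a..a+T} y" and ya: "y a = y0"
    and dy: "\<forall>r\<in>{a<..<a+T}. (y has_vector_derivative G r (y r)) (at r)"
    using picard[OF _ G_lip G_bnd G_cont, of a "a+T" y0] L0 T by auto
  have k: "1 * \<bar>snd y0\<bar> \<le> KK * \<bar>snd y0\<bar>" using KK by (intro mult_right_mono) auto
  have Lyi: "\<bar>1/fst y0 - u0\<bar> \<le> r0" "\<bar>snd y0\<bar> \<le> r0"
    using hL k unfolding Ly_def by auto
  have inRo: "\<forall>r\<in>{a..a+T}. y r \<in> Ro"
    by (rule stay_box[of G, OF GF cy]) (use dy hS ya Lyi r0 in auto)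
  show ?thesis
  proof (intro exI conjI ballI)
    fix r assume r: "r \<in> {a<..<a+T}"
    then have "y r \<in> BoxS" using inRo Ro_Box by auto
    then have "G r (y r) = F r (y r)" by (rule GF)
    then show "(y has_vector_derivative F r (y r)) (at r)" using dy r by metis
  qed (use cy ya in auto)
qed

lemma sol_decay:
  assumes sol: "impulsive_solution F (si_jump p) T x" and h0: "fst (x 0) > 0" "Ly (x 0) \<le> r0"
  shows "fst (x (real k*T)) > 0 \<and> Ly (x (real k*T)) \<le> \<rho>^k * Ly (x 0)"
proof (induction k)
  case 0 then show ?case using h0 by simp
next
  case (Suc k)
  obtain L where c: "continuous_on {real k*T..real k*T+T} (x(real k*T+T:=L))"
    and d: "\<And>r. r \<in> {real k*T<..<real k*T+T} \<Longrightarrow> ((x(real k*T+T:=L)) has_vector_derivative F r ((x(real k*T+T:=L)) r)) (at r)"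
    and e1: "(x(real k*T+T:=L)) (real k*T) = x (real k*T)"
    and e2: "(x(real k*T+T:=L)) (real k*T+T) = L"
    and j: "x (real (Suc k)*T) = si_jump p L"
    using seg_of_imp[OF sol] by blast
  have Lyk: "Ly (x (real k*T)) \<le> r0"
  proof -
    have "\<rho>^k * Ly (x 0) \<le> 1 * r0"
      using \<rho> h0 KK by (intro mult_mono) (auto simp: power_le_one Ly_def)
    then show ?thesis using Suc by simp
  qed
  have ps: "fst (si_jump p ((x(real k*T+T:=L)) (real k*T+T))) > 0"
    "Ly (si_jump p ((x(real k*T+T:=L)) (real k*T+T))) \<le> \<rho> * Ly ((x(real k*T+T:=L)) (real k*T))"
    using period_step[OF c d] e1 Suc Lyk by auto
  show ?case
  proof
    show "fst (x (real (Suc k)*T)) > 0" using ps(1) e2 j by simp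
    have "Ly (x (real (Suc k)*T)) \<le> \<rho> * Ly (x (real k*T))" using ps(2) e1 e2 j by simp
    also have "\<dots> \<le> \<rho> * (\<rho>^k * Ly (x 0))" using Suc \<rho> by (intro mult_left_mono) auto
    finally show "Ly (x (real (Suc k)*T)) \<le> \<rho>^Suc k * Ly (x 0)" by simp
  qed
qed

definition "seg a y0 = (SOME y. continuous_on {a..a+T} y \<and> y a = y0 \<and>
     (\<forall>r\<in>{a<..<a+T}. (y has_vector_derivative F r (y r)) (at r)))"

lemma seg:
  assumes "fst y0 > 0" "Ly y0 \<le> r0"
  shows "continuous_on {a..a+T} (seg a y0)" "seg a y0 a = y0"
     "\<And>r. r\<in>{a<..<a+T} \<Longrightarrow> (seg a y0 has_vector_derivative F r (seg a y0 r)) (at r)"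
  using someI_ex[OF exist_seg[OF assms, of a]] unfolding seg_def by auto

lemma floor_seg: "t \<in> {real n*T..<real n*T+T} \<Longrightarrow> nat \<lfloor>t/T\<rfloor> = n"
proof -
  assume t: "t \<in> {real n*T..<real n*T+T}"
  have "real n \<le> t/T" "t/T < real n + 1" using t T by (auto simp: field_simps)
  then have "\<lfloor>t/T\<rfloor> = int n" by (intro floor_unique) auto
  then show ?thesis by simp
qed

lemma exists_sol:
  assumes h0: "fst y0 > 0" "Ly y0 \<le> r0"
  shows "\<exists>x. impulsive_solution F (si_jump p) T x \<and> x 0 = y0"
proof -
  define v where "v = rec_nat y0 (\<lambda>n w. si_jump p (seg (real n*T) w (real n*T+T)))"
  have v0: "v 0 = y0" and vS: "v (Suc n) = si_jump p (seg (real n*T) (v n) (real n*T+T))" for n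
    by (simp_all add: v_def)
  have inv: "fst (v n) > 0 \<and> Ly (v n) \<le> r0" for n
  proof (induction n)
    case 0 then show ?case using h0 v0 by simp
  next
    case (Suc n)
    have ps: "fst (si_jump p (seg (real n*T) (v n) (real n*T+T))) > 0"
      "Ly (si_jump p (seg (real n*T) (v n) (real n*T+T))) \<le> \<rho> * Ly (seg (real n*T) (v n) (real n*T))"
      using period_step[OF seg(1,3)] Suc seg(2) by (auto simp: seg(2)[OF conjunct1[OF Suc] conjunct2[OF Suc]])
    have "\<rho> * Ly (v n) \<le> 1 * r0" using \<rho> Suc KK by (intro mult_mono) (auto simp: Ly_def)
    then show ?case using ps vS seg(2)[of "v n"] Suc by auto
  qed
  define x where "x t = seg (real (nat \<lfloor>t/T\<rfloor>)*T) (v (nat \<lfloor>t/T\<rfloor>)) t" for t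
  have xn: "x t = seg (real n*T) (v n) t" if "t \<in> {real n*T..<real n*T+T}" for n t
    using floor_seg[OF that] by (simp add: x_def)
  have e: "real (Suc n) * T = real n*T+T" for n by (simp add: algebra_simps)
  show ?thesis
  proof (intro exI conjI)
    show "x 0 = y0" using xn[of 0 0] T seg(2) h0 v0 by simp
    show "impulsive_solution F (si_jump p) T x"
      unfolding impulsive_solution_def e
    proof (intro allI conjI ballI)
      fix n
      have sc: "continuous_on {real n*T..real n*T+T} (seg (real n*T) (v n))" using seg(1) inv by blast
      show "continuous_on {real n*T..<real n*T+T} x"
        by (rule continuous_on_eq[of _ "seg (real n*T) (v n)"]) (use sc xn in \<open>auto intro: continuous_on_subset\<close>)
      fix r assume r: "r \<in> {real n*T<..<real n*T+T}"
      have "(seg (real n*T) (v n) has_vector_derivative F r (seg (real n*T) (v n) r)) (at r)"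
        using seg(3) inv r by blast
      then have "(seg (real n*T) (v n) has_vector_derivative F r (x r)) (at r)" using xn[of r n] r by simp
      then show "(x has_vector_derivative F r (x r)) (at r)"
        by (rule has_vector_derivative_transform_within_open[of _ _ _ "{real n*T<..<real n*T+T}"])
          (use r xn in \<open>auto simp del: atLeastLessThan_iff\<close>, metis atLeastLessThan_iff less_le)
    next
      fix n
      have sc: "continuous_on {real n*T..real n*T+T} (seg (real n*T) (v n))" using seg(1) inv by blast
      have l: "(seg (real n*T) (v n) \<longlongrightarrow> seg (real n*T) (v n) (real n*T+T)) (at_left (real n*T+T))"
        by (rule continuous_on_Icc_at_leftD[OF sc]) (use T in simp)
      have ev: "\<forall>\<^sub>F t in at_left (real n*T+T). seg (real n*T) (v n) t = x t"
        using eventually_at_left_real[of "real n*T" "real n*T+T"] T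
        by (auto elim!: eventually_mono intro!: xn[symmetric])
      have "(x \<longlongrightarrow> seg (real n*T) (v n) (real n*T+T)) (at_left (real n*T+T))"
        using tendsto_cong[OF ev] l by simp
      moreover have "x (real n*T+T) = si_jump p (seg (real n*T) (v n) (real n*T+T))"
      proof -
        have "x (real (Suc n)*T) = seg (real (Suc n)*T) (v (Suc n)) (real (Suc n)*T)"
          using xn[of "real (Suc n)*T" "Suc n"] T by simp
        also have "\<dots> = v (Suc n)" using seg(2) inv by blast
        finally show ?thesis using vS e by simp
      qed
      ultimately show "\<exists>L. (x \<longlongrightarrow> L) (at_left (real n*T+T)) \<and> x (real n*T+T) = si_jump p L"
        by blast
    qed
  qed
qed

lemma close:
  assumes e: "\<epsilon> > 0"
  shows "\<exists>r>0. r \<le> r0 \<and> (\<forall>z. fst z > 0 \<and> Ly z < r \<longrightarrow> dist z (1/u0, 0) < \<epsilon>)"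
proof -
  define r where "r = min r0 (min (u0/2) (min (\<epsilon>*u0^2/4) (\<epsilon>/2)))"
  have r: "r > 0" "r \<le> r0" "r \<le> u0/2" "r \<le> \<epsilon>*u0^2/4" "r \<le> \<epsilon>/2"
    using r0 u0 e by (auto simp: r_def)
  have "dist z (1/u0, 0) < \<epsilon>" if z: "fst z > 0" "Ly z < r" for z
  proof -
    have k: "1 * \<bar>snd z\<bar> \<le> KK * \<bar>snd z\<bar>" using KK by (intro mult_right_mono) auto
    have h1: "\<bar>1/fst z - u0\<bar> < r" and h2: "\<bar>snd z\<bar> < r" using z k by (auto simp: Ly_def)
    have iS: "1/fst z > u0/2" using h1 r by (auto simp: abs_less_iff)
    have "fst z - 1/u0 = (u0 - 1/fst z)/((1/fst z)*u0)" using z u0 by (simp add: field_simps)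
    then have "\<bar>fst z - 1/u0\<bar> = \<bar>1/fst z - u0\<bar>/((1/fst z)*u0)" using z u0 by (simp add: abs_minus_commute abs_mult)
    also have "\<dots> \<le> r/((u0/2)*u0)"
    proof (rule frac_le)
      show "(u0/2)*u0 \<le> (1/fst z)*u0" using iS u0 by (intro mult_right_mono) auto
    qed (use h1 r u0 in auto)
    also have "\<dots> \<le> \<epsilon>/2" using r(4) u0 by (simp add: field_simps power2_eq_square)
    finally have "\<bar>fst z - 1/u0\<bar> \<le> \<epsilon>/2" .
    moreover have "dist z (1/u0, 0) \<le> \<bar>fst z - 1/u0\<bar> + \<bar>snd z\<bar>"
      using norm_le_sum[of "z - (1/u0, 0)"] by (simp add: dist_norm)
    ultimately show ?thesis using h2 r by linarith
  qed
  then show ?thesis using r by blast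
qed

lemma W_open: "open {z. fst z > 0 \<and> Ly z < r}"
proof -
  have "continuous_on {z::real\<times>real. 0 < fst z} Ly"
    unfolding Ly_def by (intro continuous_intros) auto
  then have "open ({z::real\<times>real. 0 < fst z} \<inter> Ly -` {..<r})"
  proof (rule continuous_open_preimage)
    show "open {z::real\<times>real. 0 < fst z}" by (intro open_Collect_less continuous_intros)
  qed auto
  moreover have "{z. fst z > 0 \<and> Ly z < r} = {z::real\<times>real. 0 < fst z} \<inter> Ly -` {..<r}" by auto
  ultimately show ?thesis by simp
qed

lemma Ly0: "Ly (1/u0, 0) = 0" using u0 by (simp add: Ly_def)

theorem stable: "asymp_stable_periodic F (si_jump p) T (1/u0, 0)"
  unfolding asymp_stable_periodic_def
proof (intro conjI allI impI)
  fix V :: "(real\<times>real) set" assume V: "open V \<and> (1/u0, 0) \<in> V"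
  obtain \<epsilon> where e: "\<epsilon> > 0" "ball (1/u0, 0) \<epsilon> \<subseteq> V" using V open_contains_ball by blast
  obtain r where r: "r > 0" "r \<le> r0" "\<And>z. fst z > 0 \<and> Ly z < r \<Longrightarrow> dist z (1/u0, 0) < \<epsilon>"
    using close[OF e(1)] by blast
  show "\<exists>W. open W \<and> (1/u0, 0) \<in> W \<and> W \<subseteq> V \<and>
           (\<forall>y0\<in>W. (\<exists>x. impulsive_solution F (si_jump p) T x \<and> x 0 = y0) \<and>
              (\<forall>x. impulsive_solution F (si_jump p) T x \<and> x 0 = y0 \<longrightarrow> (\<forall>k::nat. x (real k * T) \<in> V)))"
  proof (rule exI[of _ "{z. fst z > 0 \<and> Ly z < r}"], intro conjI ballI allI impI)
    show "open {z. fst z > 0 \<and> Ly z < r}" by (rule W_open)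
    show "(1/u0, 0) \<in> {z. fst z > 0 \<and> Ly z < r}" using u0 r Ly0 by simp
    show "{z. fst z > 0 \<and> Ly z < r} \<subseteq> V" using r(3) e(2) by (auto simp: dist_commute)
    fix y0 assume y0: "y0 \<in> {z. fst z > 0 \<and> Ly z < r}"
    then show "\<exists>x. impulsive_solution F (si_jump p) T x \<and> x 0 = y0"
      using exists_sol r by auto
    fix x k assume x: "impulsive_solution F (si_jump p) T x \<and> x 0 = y0"
    have d: "fst (x (real k*T)) > 0 \<and> Ly (x (real k*T)) \<le> \<rho>^k * Ly (x 0)"
      using sol_decay[of x k] x y0 r by auto
    have "\<rho>^k * Ly (x 0) \<le> 1 * Ly (x 0)"
      using \<rho> KK by (intro mult_right_mono) (auto simp: power_le_one Ly_def)
    then have "Ly (x (real k*T)) < r" using d x y0 by auto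
    then have "x (real k*T) \<in> ball (1/u0, 0) \<epsilon>" using r(3) d by (auto simp: dist_commute)
    then show "x (real k*T) \<in> V" using e(2) by auto
  qed
next
  show "\<exists>V. open V \<and> (1/u0, 0) \<in> V \<and>
        (\<forall>y0\<in>V. (\<exists>x. impulsive_solution F (si_jump p) T x \<and> x 0 = y0) \<and>
           (\<forall>x. impulsive_solution F (si_jump p) T x \<and> x 0 = y0 \<longrightarrow>
               (\<lambda>k::nat. x (real k * T)) \<longlonglongrightarrow> (1/u0, 0)))"
  proof (rule exI[of _ "{z. fst z > 0 \<and> Ly z < r0}"], intro conjI ballI allI impI)
    show "open {z. fst z > 0 \<and> Ly z < r0}" by (rule W_open)
    show "(1/u0, 0) \<in> {z. fst z > 0 \<and> Ly z < r0}" using u0 r0 Ly0 by simp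
    fix y0 assume y0: "y0 \<in> {z. fst z > 0 \<and> Ly z < r0}"
    then show "\<exists>x. impulsive_solution F (si_jump p) T x \<and> x 0 = y0"
      using exists_sol by auto
    fix x assume x: "impulsive_solution F (si_jump p) T x \<and> x 0 = y0"
    have d: "fst (x (real k*T)) > 0 \<and> Ly (x (real k*T)) \<le> \<rho>^k * Ly (x 0)" for k
      using sol_decay[of x k] x y0 by auto
    have lim0: "(\<lambda>k. \<rho>^k * Ly (x 0)) \<longlonglongrightarrow> 0"
      using \<rho> by (intro tendsto_mult_left_zero LIMSEQ_power_zero) auto
    show "(\<lambda>k::nat. x (real k * T)) \<longlonglongrightarrow> (1/u0, 0)"
    proof (rule tendstoI)
      fix \<epsilon> :: real assume e: "\<epsilon> > 0"
      obtain r where r: "r > 0" "\<And>z. fst z > 0 \<and> Ly z < r \<Longrightarrow> dist z (1/u0, 0) < \<epsilon>"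
        using close[OF e] by blast
      have "\<forall>\<^sub>F k in sequentially. \<rho>^k * Ly (x 0) < r" using order_tendstoD(2)[OF lim0 r(1)] .
      then show "\<forall>\<^sub>F k in sequentially. dist (x (real k*T)) (1/u0, 0) < \<epsilon>"
        by eventually_elim (use d r(2) in \<open>meson le_less_trans\<close>)
    qed
  qed
qed

end


lemma exp_comb2:
  fixes X Y p1 p0 d :: real
  assumes "Y * exp (-2*p0) \<le> X * exp (-2*p1)" "p1 - p0 = d"
  shows "Y * exp (2*d) \<le> X"
proof -
  have "exp (-2*p0) = exp (2*d) * exp (-2*p1)" using assms(2) by (simp add: algebra_simps flip: exp_add)
  then have "(Y * exp (2*d)) * exp (-2*p1) \<le> X * exp (-2*p1)" using assms(1) by (simp add: algebra_simps)
  then show ?thesis by simp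
qed

locale unstloc = sysloc +
  assumes low: "\<beta>0*(A*T + ln (1-p)) - c*T \<ge> 0"
begin

definition "lam0 = \<beta>0 * exp (-(A*T)) * (\<beta>0 * exp (-(M1*T)) * umin) * T^2 / (2*u0*umax)"
lemma lam0: "lam0 > 0" using \<beta>0 umin u0 umax T by (simp add: lam0_def)

lemma period_grow:
  assumes cy: "continuous_on {a..a+T} y"
    and dy: "\<And>r. r \<in> {a<..<a+T} \<Longrightarrow> (y has_vector_derivative F r (y r)) (at r)"
    and hS: "fst (y a) > 0" and hu: "1/fst (y a) \<le> u0" and hu2: "\<bar>1/fst (y a) - u0\<bar> \<le> \<delta>0"
    and hI: "snd (y a) < 0" and hI2: "\<bar>snd (y a)\<bar> \<le> \<eta>0"
  shows "fst (si_jump p (y (a+T))) > 0" "1/fst (si_jump p (y (a+T))) \<le> u0"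
    "snd (si_jump p (y (a+T))) < 0"
    "\<bar>snd (si_jump p (y (a+T)))\<bar> \<ge> \<bar>snd (y a)\<bar> * exp (lam0 * \<bar>snd (y a)\<bar>)"
proof -
  define i where "i = \<bar>snd (y a)\<bar>"
  have i0: "i > 0" using hI by (simp add: i_def)
  have inRo: "\<forall>r\<in>{a..a+T}. y r \<in> Ro"
    by (rule stay_box[of F, OF _ cy dy hS hu2 hI2]) auto
  have box: "y r \<in> BoxS" if "r \<in> {a..a+T}" for r using inRo Ro_Box that by auto
  have aT: "a \<le> a + T" using T by simp
  have cI: "continuous_on {a..a+T} (\<lambda>r. snd (y r))" using cy by (intro continuous_intros)
  have Ilow: "\<bar>snd (y r)\<bar> \<ge> i * exp (-(M1*T))" if r: "r \<in> {a..a+T}" for r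
  proof -
    have r1: "a \<le> r" "r \<le> a+T" using r by auto
    have "i \<le> \<bar>snd (y r)\<bar> * exp (M1*(r-a))"
      unfolding i_def
      by (rule est_I(2)[OF r1(1)]) (use cy dy box r1 in \<open>auto intro: continuous_on_subset\<close>)
    also have "\<dots> \<le> \<bar>snd (y r)\<bar> * exp (M1*T)" using r1 M1 by (intro mult_left_mono) auto
    finally show ?thesis by (simp add: exp_minus field_simps)
  qed
  have Ineg: "snd (y r) < 0" if r: "r \<in> {a..a+T}" for r
  proof (rule ccontr)
    assume "\<not> snd (y r) < 0"
    moreover have "continuous_on {a..r} (\<lambda>r. snd (y r))" using r by (intro continuous_on_subset[OF cI]) auto
    ultimately obtain s where s: "a \<le> s" "s \<le> r" "snd (y s) = 0"
      using IVT'[of "\<lambda>r. snd (y r)" a 0 r] hI r by auto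
    then have "\<bar>snd (y s)\<bar> \<ge> i * exp (-(M1*T))" using r by (intro Ilow) auto
    then show False using s i0 by (simp add: mult_le_0_iff)
  qed
  define \<kappa> where "\<kappa> = \<beta>0 * (i * exp (-(M1*T))) * umin"
  have \<kappa>0: "\<kappa> > 0" using \<beta>0 i0 umin by (simp add: \<kappa>_def)
  have Spos: "fst (y r) > 0" if "r \<in> {a..a+T}" for r using box_facts(1)[OF box[OF that]] .
  have cg: "continuous_on {a..a+T} (gq y a)"
    unfolding gq_def us_def using cy Spos A Ke
    by (intro continuous_intros) (auto, fastforce)
  have gbound: "gq y a r \<le> - \<kappa> * (r - a)" if r: "r \<in> {a..a+T}" for r
  proof -
    have r1: "a \<le> r" "r \<le> a+T" using r by auto
    have "gq y a r + \<kappa> * (r - a) \<le> gq y a a + \<kappa> * (a - a)"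
    proof (rule mono_le[OF r1(1), of _ "\<lambda>r. exp (A*(r-a)) * (b r * snd (y r) / fst (y r)) + \<kappa>"])
      show "continuous_on {a..r} (\<lambda>r. gq y a r + \<kappa> * (r - a))"
        using cg r1 by (intro continuous_intros) (auto intro: continuous_on_subset)
      fix s assume s: "a < s" "s < r"
      have sI: "s \<in> {a<..<a+T}" using s r1 by auto
      show "((\<lambda>r. gq y a r + \<kappa> * (r - a)) has_real_derivative
          exp (A*(s-a)) * (b s * snd (y s) / fst (y s)) + \<kappa>) (at s)"
        using gq_deriv[OF aT cy dy sI] Spos[of s] sI by (auto intro!: derivative_eq_intros)
      have sb: "s \<in> {a..a+T}" using sI by auto
      have "\<kappa> \<le> exp (A*(s-a)) * (b s * \<bar>snd (y s)\<bar> * (1/fst (y s)))"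
      proof -
        have "\<kappa> = 1 * (\<beta>0 * (i * exp (-(M1*T))) * umin)" by (simp add: \<kappa>_def)
        also have "\<dots> \<le> exp (A*(s-a)) * (b s * \<bar>snd (y s)\<bar> * (1/fst (y s)))"
          using s A blo[of s] \<beta>0 Ilow[OF sb] box_facts(3)[OF box[OF sb]] umin i0
          by (intro mult_mono) auto
        finally show ?thesis .
      qed
      moreover have "exp (A*(s-a)) * (b s * snd (y s) / fst (y s)) =
          - (exp (A*(s-a)) * (b s * \<bar>snd (y s)\<bar> * (1/fst (y s))))"
        using Ineg[OF sb] by simp
      ultimately show "exp (A*(s-a)) * (b s * snd (y s) / fst (y s)) + \<kappa> \<le> 0" by simp
    qed
    moreover have "gq y a a \<le> 0" using hu by (simp add: gq_def u0_def)
    ultimately show ?thesis by simp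
  qed
  define lam where "lam = \<beta>0 * exp (-(A*T)) * \<kappa> / (2*u0*umax)"
  have lamT: "lam * T^2 = lam0 * i" by (simp add: lam_def lam0_def \<kappa>_def)
  have rate: "b r * fst (y r) - c \<ge> \<beta>0 * (1/us (r-a)) - c + 2*lam*(r-a)" if r: "r \<in> {a<..<a+T}" for r
  proof -
    have rb: "r \<in> {a..a+T}" using r by auto
    have Sp: "fst (y r) > 0" using Spos rb .
    have u1: "1/fst (y r) \<le> umax" using box_facts(2)[OF box[OF rb]] .
    have usr: "us (r-a) \<le> u0" "us (r-a) > 0" using us_le us_pos r by auto
    have v: "us (r-a) - 1/fst (y r) \<ge> exp (-(A*T)) * \<kappa> * (r-a)"
    proof -
      have "gq y a r = exp (A*(r-a)) * (1/fst (y r) - us (r-a))" by (simp add: gq_def)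
      then have "exp (A*(r-a)) * (us (r-a) - 1/fst (y r)) \<ge> \<kappa> * (r-a)"
        using gbound[OF rb] by (simp add: algebra_simps)
      then have "us (r-a) - 1/fst (y r) \<ge> (\<kappa> * (r-a)) / exp (A*(r-a))"
        by (simp add: pos_divide_le_eq mult.commute)
      then have "us (r-a) - 1/fst (y r) \<ge> exp (-(A*(r-a))) * (\<kappa> * (r-a))"
        by (simp add: exp_minus divide_inverse mult.commute)
      moreover have "exp (-(A*T)) * (\<kappa> * (r-a)) \<le> exp (-(A*(r-a))) * (\<kappa> * (r-a))"
        using r A \<kappa>0 by (intro mult_right_mono) auto
      ultimately show ?thesis by simp
    qed
    have "fst (y r) - 1/us (r-a) = (us (r-a) - 1/fst (y r)) / ((1/fst (y r)) * us (r-a))"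
      using Sp usr by (simp add: field_simps)
    also have "\<dots> \<ge> (exp (-(A*T)) * \<kappa> * (r-a)) / (umax * u0)"
    proof (rule frac_le)
      have "0 \<le> exp (-(A*T)) * \<kappa> * (r-a)" using \<kappa>0 r by simp
      then show "0 \<le> us (r-a) - 1/fst (y r)" using v by linarith
      show "0 < 1/fst (y r) * us (r-a)" using Sp usr by simp
      show "1/fst (y r) * us (r-a) \<le> umax * u0" using u1 usr Sp umax by (intro mult_mono) auto
    qed (use v in auto)
    finally have d: "fst (y r) - 1/us (r-a) \<ge> exp (-(A*T)) * \<kappa> * (r-a) / (umax * u0)" .
    have "b r * fst (y r) \<ge> \<beta>0 * fst (y r)" using blo[of r] Sp by (intro mult_right_mono) auto
    moreover have "\<beta>0 * (fst (y r) - 1/us (r-a)) \<ge> \<beta>0 * (exp (-(A*T)) * \<kappa> * (r-a) / (umax * u0))"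
      using d \<beta>0 by (intro mult_left_mono) auto
    moreover have "\<beta>0 * (exp (-(A*T)) * \<kappa> * (r-a) / (umax * u0)) = 2*lam*(r-a)"
      by (simp add: lam_def field_simps)
    ultimately show ?thesis by (simp add: algebra_simps)
  qed
  have "(snd (y (a+T)))^2 * exp (-2*((\<beta>0 * Phi a (a+T) - c*(a+T-a) + lam*(a+T-a)^2)))
      \<ge> (snd (y a))^2 * exp (-2*((\<beta>0 * Phi a a - c*(a-a) + lam*(a-a)^2)))"
    by (rule I_lower[OF aT cy dy, of "\<lambda>r. \<beta>0 * Phi a r - c*(r-a) + lam*(r-a)^2"
          "\<lambda>r. \<beta>0 * (1/us (r-a)) - c + 2*lam*(r-a)"])
      (auto intro!: continuous_intros derivative_eq_intros Phi_cont Phi_deriv, use rate in force)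
  then have "(snd (y a))^2 * exp (2*(\<beta>0*(A*T + ln (1-p)) - c*T + lam*T^2)) \<le> (snd (y (a+T)))^2"
    by (rule exp_comb2) (use Phi_period[of a] in \<open>simp add: algebra_simps\<close>)
  moreover have "(snd (y a))^2 * exp (2*(lam0 * i)) \<le> (snd (y a))^2 * exp (2*(\<beta>0*(A*T + ln (1-p)) - c*T + lam*T^2))"
    using low lamT by (intro mult_left_mono) auto
  ultimately have "(i * exp (lam0 * i))^2 \<le> (snd (y (a+T)))^2"
    by (simp add: sq_exp i_def)
  then have Igr: "i * exp (lam0 * i) \<le> \<bar>snd (y (a+T))\<bar>"
    using abs_le_square_iff[of "i * exp (lam0 * i)" "snd (y (a+T))"] i0 by simp
  have aTb: "a+T \<in> {a..a+T}" using T by simp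
  have SaT: "fst (y (a+T)) > 0" using Spos[OF aTb] .
  show "fst (si_jump p (y (a+T))) > 0" using SaT p1 by (simp add: si_jump_def)
  show "snd (si_jump p (y (a+T))) < 0" using Ineg[OF aTb] by (simp add: si_jump_def)
  show "\<bar>snd (si_jump p (y (a+T)))\<bar> \<ge> \<bar>snd (y a)\<bar> * exp (lam0 * \<bar>snd (y a)\<bar>)"
    using Igr by (simp add: si_jump_def i_def)
  have "\<kappa> * T \<ge> 0" using \<kappa>0 T by simp
  then have "gq y a (a+T) \<le> 0" using gbound[OF aTb] by simp
  then have "1/fst (y (a+T)) \<le> (1-p)*u0" by (simp add: gq_def usT mult_le_0_iff)
  then show "1/fst (si_jump p (y (a+T))) \<le> u0"
    using SaT p1 by (simp add: si_jump_def field_simps)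
qed

theorem unstable: "\<not> asymp_stable_periodic F (si_jump p) T (1/u0, 0)"
proof
  assume H: "asymp_stable_periodic F (si_jump p) T (1/u0, 0)"
  define \<epsilon> where "\<epsilon> = min (1/(2*u0)) (min (\<delta>0/(2*u0^2)) \<eta>0)"
  have \<epsilon>: "\<epsilon> > 0" "\<epsilon> \<le> 1/(2*u0)" "\<epsilon> \<le> \<delta>0/(2*u0^2)" "\<epsilon> \<le> \<eta>0"
    using u0 \<delta>0 \<eta>0 by (auto simp: \<epsilon>_def)
  define V where "V = ball (1/u0, 0::real) \<epsilon>"
  have inV: "fst z > 0 \<and> \<bar>1/fst z - u0\<bar> \<le> \<delta>0 \<and> \<bar>snd z\<bar> \<le> \<eta>0" if z: "z \<in> V" for z
  proof -
    have d: "norm (z - (1/u0, 0)) < \<epsilon>" using z by (simp add: V_def dist_norm norm_minus_commute)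
    have h1: "\<bar>fst z - 1/u0\<bar> < \<epsilon>" using abs_fst_le[of "z - (1/u0, 0)"] d by simp
    have h2: "\<bar>snd z\<bar> < \<epsilon>" using abs_snd_le[of "z - (1/u0, 0)"] d by simp
    have Sg: "fst z > 1/(2*u0)"
    proof -
      have "1/u0 - 1/(2*u0) = 1/(2*u0)" by (simp add: field_simps)
      then show ?thesis using h1 \<epsilon>(2) by (auto simp: abs_less_iff)
    qed
    have Sp: "fst z > 0" using Sg u0 by (smt (verit) divide_pos_pos)
    have "1/fst z - u0 = (1/u0 - fst z) * (u0 / fst z)" using Sp u0 by (simp add: field_simps)
    then have "\<bar>1/fst z - u0\<bar> = \<bar>fst z - 1/u0\<bar> * (u0 / fst z)"
      using Sp u0 by (simp add: abs_mult abs_minus_commute)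
    also have "\<dots> \<le> \<epsilon> * (2*u0^2)"
    proof (rule mult_mono)
      have "u0 / fst z \<le> u0 / (1/(2*u0))" using Sg u0 Sp by (intro divide_left_mono) auto
      then show "u0 / fst z \<le> 2*u0^2" using u0 by (simp add: power2_eq_square)
    qed (use h1 Sp u0 in auto)
    also have "\<dots> \<le> \<delta>0" using \<epsilon>(3) u0 by (simp add: field_simps)
    finally show ?thesis using Sp h2 \<epsilon>(4) by simp
  qed
  have "open V" "(1/u0, 0) \<in> V" using \<epsilon> by (auto simp: V_def)
  then obtain W where W: "open W" "(1/u0, 0) \<in> W" "W \<subseteq> V"
    and Wp: "\<And>y0. y0 \<in> W \<Longrightarrow> (\<exists>x. impulsive_solution F (si_jump p) T x \<and> x 0 = y0) \<and>
              (\<forall>x. impulsive_solution F (si_jump p) T x \<and> x 0 = y0 \<longrightarrow> (\<forall>k::nat. x (real k * T) \<in> V))"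
    using H unfolding asymp_stable_periodic_def by meson
  obtain \<epsilon>' where e': "\<epsilon>' > 0" "ball (1/u0, 0) \<epsilon>' \<subseteq> W" using W open_contains_ball by blast
  define \<eta> where "\<eta> = min \<epsilon>' \<eta>0 / 2"
  have \<eta>: "\<eta> > 0" "\<eta> < \<epsilon>'" using e' \<eta>0 by (auto simp: \<eta>_def)
  define y0 where "y0 = (1/u0, -\<eta>)"
  have "y0 \<in> W"
  proof -
    have "dist y0 (1/u0, 0) = \<eta>" using \<eta> by (simp add: y0_def dist_norm norm_Pair)
    then show ?thesis using e' \<eta> by (auto simp: dist_commute)
  qed
  then obtain x where sol: "impulsive_solution F (si_jump p) T x" and x0: "x 0 = y0"
    and stay: "\<And>k::nat. x (real k * T) \<in> V"
    using Wp by blast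
  have claim: "fst (x (real k*T)) > 0 \<and> 1/fst (x (real k*T)) \<le> u0 \<and> snd (x (real k*T)) < 0 \<and>
      \<bar>snd (x (real k*T))\<bar> \<ge> \<eta> + real k * (lam0 * \<eta>^2)" for k
  proof (induction k)
    case 0 then show ?case using x0 u0 \<eta> by (simp add: y0_def)
  next
    case (Suc k)
    obtain L where c: "continuous_on {real k*T..real k*T+T} (x(real k*T+T:=L))"
      and d: "\<And>r. r \<in> {real k*T<..<real k*T+T} \<Longrightarrow> ((x(real k*T+T:=L)) has_vector_derivative F r ((x(real k*T+T:=L)) r)) (at r)"
      and e1: "(x(real k*T+T:=L)) (real k*T) = x (real k*T)"
      and e2: "(x(real k*T+T:=L)) (real k*T+T) = L"
      and j: "x (real (Suc k)*T) = si_jump p L"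
      using seg_of_imp[OF sol] by blast
    have v: "\<bar>1/fst (x (real k*T)) - u0\<bar> \<le> \<delta>0" "\<bar>snd (x (real k*T))\<bar> \<le> \<eta>0"
      using inV[OF stay[of k]] by auto
    have pg: "fst (si_jump p L) > 0" "1/fst (si_jump p L) \<le> u0" "snd (si_jump p L) < 0"
      "\<bar>snd (si_jump p L)\<bar> \<ge> \<bar>snd (x (real k*T))\<bar> * exp (lam0 * \<bar>snd (x (real k*T))\<bar>)"
      using period_grow[OF c d] e1 e2 Suc v by auto
    define I where "I = \<bar>snd (x (real k*T))\<bar>"
    have Ige: "I \<ge> \<eta>" using Suc \<eta> lam0 by (simp add: I_def) (smt (verit) mult_nonneg_nonneg of_nat_0_le_iff zero_le_power2)
    have "I * exp (lam0 * I) \<ge> I * (1 + lam0 * I)"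
      using Ige \<eta> by (intro mult_left_mono) auto
    moreover have "I * (1 + lam0 * I) \<ge> I + lam0 * \<eta>^2"
    proof -
      have "\<eta>^2 \<le> I^2" using Ige \<eta> by (intro power_mono) auto
      then have "lam0 * \<eta>^2 \<le> lam0 * I^2" using lam0 by (intro mult_left_mono) auto
      then show ?thesis by (simp add: algebra_simps power2_eq_square)
    qed
    moreover have "I \<ge> \<eta> + real k * (lam0 * \<eta>^2)" using Suc.IH unfolding I_def by blast
    ultimately have "\<bar>snd (si_jump p L)\<bar> \<ge> \<eta> + real (Suc k) * (lam0 * \<eta>^2)"
      using pg(4) by (simp add: I_def algebra_simps)
    then show ?case using pg j by simp
  qed
  obtain k :: nat where k: "\<eta>0 / (lam0 * \<eta>^2) < real k" using reals_Archimedean2 by blast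
  have "\<eta>0 < real k * (lam0 * \<eta>^2)" using k lam0 \<eta> by (simp add: pos_divide_less_eq)
  then have "\<bar>snd (x (real k*T))\<bar> > \<eta>0" using claim[of k] \<eta> by linarith
  then show False using inV[OF stay[of k]] by simp
qed

end


context baseloc
begin

lemma seg_zero:
  assumes cy: "continuous_on {a..a+T} y"
    and dy: "\<And>r. r \<in> {a<..<a+T} \<Longrightarrow> (y has_vector_derivative F r (y r)) (at r)"
    and hI: "snd (y a) = 0" and hS: "fst (y a) < 0"
  shows "snd (y (a+T)) = 0" "fst (y (a+T)) < 0"
    "1/fst (y (a+T)) = exp (-(A*T)) * (1/fst (y a) - 1/A) + 1/A"
proof -
  have aT: "a \<le> a+T" using T by simp
  have "compact ((\<lambda>r. fst (y r)) ` {a..a+T})"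
    by (rule compact_continuous_image) (use cy in \<open>auto intro: continuous_intros\<close>)
  then have "bounded ((\<lambda>r. fst (y r)) ` {a..a+T})" by (rule compact_imp_bounded)
  then obtain B where "\<forall>x\<in>(\<lambda>r. fst (y r)) ` {a..a+T}. norm x \<le> B" unfolding bounded_iff by blast
  then have B: "\<And>r. r \<in> {a..a+T} \<Longrightarrow> \<bar>fst (y r)\<bar> \<le> B" by auto
  have B0: "B \<ge> 0" using B[of a] T by force
  have sub: "continuous_on {a..r} y" "\<And>s. s \<in> {a<..<r} \<Longrightarrow> (y has_vector_derivative F s (y s)) (at s)"
    if "r \<in> {a..a+T}" for r
    using that cy dy by (auto intro: continuous_on_subset)
  have I0: "snd (y r) = 0" if r: "r \<in> {a..a+T}" for r
  proof -
    have r1: "a \<le> r" using r by auto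
    have "(snd (y r))^2 * exp (-2*((bM*B + c)*(r-a))) \<le> (snd (y a))^2 * exp (-2*((bM*B + c)*(a-a)))"
    proof (rule I_upper[OF r1 sub[OF r], of "\<lambda>r. (bM*B + c)*(r-a)" "\<lambda>_. bM*B + c"])
      fix s assume s: "s \<in> {a<..<r}"
      have "b s * fst (y s) \<le> bM * B"
      proof -
        have "b s * fst (y s) \<le> \<bar>b s\<bar> * \<bar>fst (y s)\<bar>" by (metis abs_ge_self abs_mult)
        also have "\<dots> \<le> bM * B" using blo[of s] bhi[of s] \<beta>0 B[of s] s r
          by (intro mult_mono) auto
        finally show ?thesis .
      qed
      then show "b s * fst (y s) - c \<le> bM*B + c" using c by simp
    qed (auto intro!: continuous_intros derivative_eq_intros)
    then have "(snd (y r))^2 * exp (-2*((bM*B + c)*(r-a))) \<le> 0" using hI by simp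
    then have "(snd (y r))^2 \<le> 0" by (simp add: mult_le_0_iff)
    then show ?thesis by simp
  qed
  have Snz: "fst (y r) \<noteq> 0" if r: "r \<in> {a..a+T}" for r
  proof -
    have r1: "a \<le> r" using r by auto
    have "(fst (y a))^2 * exp (2*((A+B)*(a-a))) \<le> (fst (y r))^2 * exp (2*((A+B)*(r-a)))"
    proof (rule mono_ge[OF r1])
      show "continuous_on {a..r} (\<lambda>s. (fst (y s))^2 * exp (2*((A+B)*(s-a))))"
        using sub(1)[OF r] by (intro continuous_intros)
      fix s assume s: "a < s" "s < r"
      have sI: "s \<in> {a<..<a+T}" using s r by auto
      show "((\<lambda>s. (fst (y s))^2 * exp (2*((A+B)*(s-a)))) has_real_derivative
          2 * (fst (y s))^2 * exp (2*((A+B)*(s-a))) * (A - fst (y s) + (A+B))) (at s)"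
        using I0[of s] sI
        by (auto intro!: derivative_eq_intros dS[OF aT cy dy] simp: algebra_simps power2_eq_square)
      have "fst (y s) \<le> B" using B[of s] sI by auto
      then have "A - fst (y s) + (A+B) \<ge> 0" using A by linarith
      then show "2 * (fst (y s))^2 * exp (2*((A+B)*(s-a))) * (A - fst (y s) + (A+B)) \<ge> 0" by simp
    qed
    then show ?thesis using hS by auto
  qed
  have Sneg: "fst (y r) < 0" if r: "r \<in> {a..a+T}" for r
  proof (rule ccontr)
    assume "\<not> fst (y r) < 0"
    moreover have "continuous_on {a..r} (\<lambda>r. fst (y r))" using sub(1)[OF r] by (intro continuous_intros)
    ultimately obtain s where s: "a \<le> s" "s \<le> r" "fst (y s) = 0"
      using IVT'[of "\<lambda>r. fst (y r)" a 0 r] hS r by auto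
    then show False using Snz[of s] r by auto
  qed
  define h where "h r = exp (A*(r-a)) * (1/fst (y r) - 1/A)" for r
  have ch: "continuous_on {a..a+T} h"
    unfolding h_def using cy Snz by (intro continuous_intros) auto
  have dh: "(h has_real_derivative 0) (at r)" if r: "r \<in> {a<..<a+T}" for r
  proof -
    have rb: "r \<in> {a..a+T}" using r by auto
    have "(h has_real_derivative exp (A*(r-a)) * A * (1/fst (y r) - 1/A) +
        exp (A*(r-a)) * (- ((fst (y r)*(A - fst (y r)) - b r * snd (y r) * fst (y r)) / (fst (y r))^2))) (at r)"
      unfolding h_def using Snz[OF rb] r
      by (auto intro!: derivative_eq_intros dS[OF aT cy dy] simp: power2_eq_square)
         (simp_all add: field_simps)
    moreover have "exp (A*(r-a)) * A * (1/fst (y r) - 1/A) +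
        exp (A*(r-a)) * (- ((fst (y r)*(A - fst (y r)) - b r * snd (y r) * fst (y r)) / (fst (y r))^2)) = 0"
      using I0[OF rb] Snz[OF rb] A by (simp add: field_simps power2_eq_square)
    ultimately show ?thesis by simp
  qed
  have "h (a+T) \<le> h a" by (rule mono_le[OF aT ch dh]) auto
  moreover have "h a \<le> h (a+T)" by (rule mono_ge[OF aT ch dh]) auto
  ultimately have "h (a+T) = h a" by simp
  then have "exp (A*T) * (1/fst (y (a+T)) - 1/A) = 1/fst (y a) - 1/A" by (simp add: h_def)
  then show "1/fst (y (a+T)) = exp (-(A*T)) * (1/fst (y a) - 1/A) + 1/A"
    by (simp add: exp_minus field_simps)
  show "snd (y (a+T)) = 0" using I0 T by simp
  show "fst (y (a+T)) < 0" using Sneg T by simp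
qed

end

lemma alg1: fixes E q A :: real assumes "E > 1" "q \<noteq> 0" "A \<noteq> 0"
  shows "(1 - 1/E)/(A*q) * (A*(E*q - 1)/(E - 1)) = 1 - (1/E)/q"
proof -
  have "E - 1 \<noteq> 0" "E \<noteq> 0" using assms by auto
  then show ?thesis using assms by (simp add: field_simps)
qed
lemma alg2: fixes e q A uk :: real assumes "q \<noteq> 0" "A \<noteq> 0"
  shows "(e * (uk - 1/A) + 1/A)/q = (e/q) * uk + (1 - e)/(A*q)"
  using assms by (simp add: field_simps)

locale blowloc = baseloc +
  assumes Knon: "exp (A*T)*(1-p) \<le> 1"
begin

definition "sstar = A*(exp (A*T)*(1-p) - 1)/(exp (A*T) - 1)"
definition "thb = exp (-(A*T))/(1-p)"
definition "dd = (1 - exp (-(A*T)))/(A*(1-p))"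

lemma eAT: "exp (A*T) > 1" using A T by simp
lemma thb: "thb \<ge> 1"
proof -
  have "1 - p \<le> exp (-(A*T))" using Knon by (simp add: exp_minus field_simps)
  then show ?thesis using p1 by (simp add: thb_def)
qed
lemma dd: "dd > 0" using A T p1 by (simp add: dd_def)
lemma sstar: "sstar \<le> 0" using Knon eAT A unfolding sstar_def
  by (intro divide_nonpos_pos mult_nonneg_nonpos) auto
lemma dd_sstar: "dd * sstar = 1 - thb"
proof -
  define E where "E = exp (A*T)"
  have E: "E > 1" "E \<noteq> 0" "E - 1 \<noteq> 0" using eAT by (auto simp: E_def)
  have em: "exp (-(A*T)) = 1/E" by (simp add: E_def exp_minus field_simps)
  have p: "1 - p \<noteq> 0" using p1 by simp
  show ?thesis unfolding dd_def sstar_def thb_def em E_def[symmetric]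
    using alg1[of E "1-p" A] E p A by simp
qed
lemma key: assumes "s < sstar" shows "(thb - 1)/s + dd > 0"
proof -
  have s0: "s < 0" using assms sstar by simp
  have "dd * s < dd * sstar" using assms dd by simp
  then have "(thb - 1) + dd * s < 0" using dd_sstar by simp
  then have "((thb - 1) + dd * s)/s > 0" using s0 by (simp add: divide_neg_neg)
  then show ?thesis using s0 by (simp add: field_simps)
qed

theorem blow: "\<not> asymp_stable_periodic F (si_jump p) T (sstar, 0)"
proof
  assume H: "asymp_stable_periodic F (si_jump p) T (sstar, 0)"
  obtain W where W: "open W" "(sstar, 0) \<in> W"
    and Wp: "\<And>y0. y0 \<in> W \<Longrightarrow> (\<exists>x. impulsive_solution F (si_jump p) T x \<and> x 0 = y0)"
    using H unfolding asymp_stable_periodic_def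
    by (metis open_UNIV UNIV_I)
  obtain \<epsilon> where e: "\<epsilon> > 0" "ball (sstar, 0) \<epsilon> \<subseteq> W" using W open_contains_ball by blast
  define s0 where "s0 = sstar - \<epsilon>/2"
  have s0: "s0 < sstar" "s0 < 0" using e sstar by (auto simp: s0_def)
  have "(s0, 0) \<in> W"
  proof -
    have "dist (s0, 0::real) (sstar, 0) = \<epsilon>/2" using e by (simp add: s0_def dist_norm norm_Pair)
    then show ?thesis using e by (auto simp: dist_commute)
  qed
  then obtain x where sol: "impulsive_solution F (si_jump p) T x" and x0: "x 0 = (s0, 0)"
    using Wp by blast
  define u0' where "u0' = 1/s0"
  define \<delta> where "\<delta> = (thb - 1)*u0' + dd"
  have \<delta>: "\<delta> > 0" using key[OF s0(1)] by (simp add: \<delta>_def u0'_def)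
  have claim: "snd (x (real k*T)) = 0 \<and> fst (x (real k*T)) < 0 \<and> 1/fst (x (real k*T)) \<ge> u0' + real k * \<delta>" for k
  proof (induction k)
    case 0 then show ?case using x0 s0 by (simp add: u0'_def)
  next
    case (Suc k)
    obtain L where c: "continuous_on {real k*T..real k*T+T} (x(real k*T+T:=L))"
      and d: "\<And>r. r \<in> {real k*T<..<real k*T+T} \<Longrightarrow> ((x(real k*T+T:=L)) has_vector_derivative F r ((x(real k*T+T:=L)) r)) (at r)"
      and e1: "(x(real k*T+T:=L)) (real k*T) = x (real k*T)"
      and e2: "(x(real k*T+T:=L)) (real k*T+T) = L"
      and j: "x (real (Suc k)*T) = si_jump p L"
      using seg_of_imp[OF sol] by blast
    have sz: "snd L = 0" "fst L < 0" "1/fst L = exp (-(A*T)) * (1/fst (x (real k*T)) - 1/A) + 1/A"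
      using seg_zero[OF c d] e1 e2 Suc by auto
    define uk where "uk = 1/fst (x (real k*T))"
    have ukge: "uk \<ge> u0' + real k * \<delta>" using Suc by (simp add: uk_def)
    have uk0: "uk \<ge> u0'" using ukge \<delta> by (smt (verit) mult_nonneg_nonneg of_nat_0_le_iff)
    have "1/fst (si_jump p L) = (1/fst L)/(1-p)" by (simp add: si_jump_def)
    also have "\<dots> = (exp (-(A*T)) * (uk - 1/A) + 1/A)/(1-p)" using sz(3) by (simp add: uk_def)
    also have "\<dots> = thb * uk + dd"
    proof -
      have p: "1 - p \<noteq> 0" using p1 by simp
      show ?thesis unfolding thb_def dd_def using alg2[OF p, of A "exp (-(A*T))" uk] A by simp
    qed
    also have "\<dots> = uk + ((thb - 1)*uk + dd)" by (simp add: algebra_simps)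
    also have "\<dots> \<ge> uk + \<delta>"
    proof -
      have "(thb - 1)*u0' \<le> (thb - 1)*uk" using thb uk0 by (intro mult_left_mono) auto
      then show ?thesis by (simp add: \<delta>_def)
    qed
    finally have "1/fst (si_jump p L) \<ge> u0' + real (Suc k) * \<delta>" using ukge by (simp add: algebra_simps)
    moreover have "snd (si_jump p L) = 0" "fst (si_jump p L) < 0"
      using sz p1 by (auto simp: si_jump_def mult_pos_neg)
    ultimately show ?case using j by simp
  qed
  obtain k :: nat where k: "- u0' / \<delta> < real k" using reals_Archimedean2 by blast
  have "- u0' < real k * \<delta>" using pos_divide_less_eq[OF \<delta>, of "-u0'" "real k"] k by simp
  then have "u0' + real k * \<delta> > 0" by simp
  moreover have "1/fst (x (real k*T)) < 0" using claim[of k] by simp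
  ultimately show False using claim[of k] by linarith
qed

end


lemma jump1_unstable:
  assumes T: "T > 0" and s: "s \<noteq> 0"
  shows "\<not> asymp_stable_periodic F (si_jump 1) T (s, 0)"
proof
  assume H: "asymp_stable_periodic F (si_jump 1) T (s, 0)"
  have "open (ball (s, 0::real) \<bar>s\<bar>)" "(s, 0) \<in> ball (s, 0::real) \<bar>s\<bar>" using s by auto
  then obtain W where W: "(s, 0) \<in> W"
    and Wp: "\<And>y0. y0 \<in> W \<Longrightarrow> (\<exists>x. impulsive_solution F (si_jump 1) T x \<and> x 0 = y0) \<and>
              (\<forall>x. impulsive_solution F (si_jump 1) T x \<and> x 0 = y0 \<longrightarrow> (\<forall>k::nat. x (real k * T) \<in> ball (s, 0) \<bar>s\<bar>))"
    using H unfolding asymp_stable_periodic_def by meson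
  obtain x where sol: "impulsive_solution F (si_jump 1) T x" and x0: "x 0 = (s, 0)"
    using Wp[OF W] by blast
  have inb: "x (real 1 * T) \<in> ball (s, 0) \<bar>s\<bar>" using Wp[OF W] sol x0 by blast
  obtain L where "x (real (Suc 0) * T) = si_jump 1 L"
    using sol unfolding impulsive_solution_def by blast
  then have "x (real 1 * T) = (0, snd L)" by (simp add: si_jump_def)
  then have "dist (s, 0::real) (0, snd L) < \<bar>s\<bar>" using inb by simp
  moreover have "\<bar>s\<bar> \<le> dist (s, 0::real) (0, snd L)"
    using abs_fst_le[of "(s, 0) - (0, snd L)"] by (simp add: dist_norm)
  ultimately show False by simp
qed

lemma psi_int_periodic:
  assumes per: "\<And>x. \<Psi> (x + \<tau>) = \<Psi> x"
  shows "\<Psi> (y + real n * \<tau>) = \<Psi> y"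
proof (induction n)
  case (Suc n)
  have "y + real (Suc n) * \<tau> = (y + real n * \<tau>) + \<tau>" by (simp add: algebra_simps)
  then show ?case using per[of "y + real n * \<tau>"] Suc by (simp add: add.assoc)
qed simp

lemma psi_bounded:
  fixes \<Psi> :: "real \<Rightarrow> real"
  assumes c: "continuous_on UNIV \<Psi>" and \<tau>: "\<tau> > 0" and per: "\<And>x. \<Psi> (x + \<tau>) = \<Psi> x"
  shows "\<exists>P>0. \<forall>x. \<Psi> x \<le> P"
proof -
  have "compact (\<Psi> ` {0..\<tau>})" by (rule compact_continuous_image) (use c in \<open>auto intro: continuous_on_subset\<close>)
  then have "bounded (\<Psi> ` {0..\<tau>})" by (rule compact_imp_bounded)
  then obtain B where "\<forall>x\<in>\<Psi> ` {0..\<tau>}. norm x \<le> B" unfolding bounded_iff by blast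
  then have B: "\<And>x. x \<in> {0..\<tau>} \<Longrightarrow> \<Psi> x \<le> B" by force
  have "\<Psi> x \<le> \<bar>B\<bar> + 1" for x
  proof -
    define n where "n = \<lfloor>x/\<tau>\<rfloor>"
    define y where "y = x - of_int n * \<tau>"
    have y: "y \<in> {0..\<tau>}"
    proof -
      have "of_int n \<le> x/\<tau>" "x/\<tau> < of_int n + 1" unfolding n_def by linarith+
      then have "of_int n * \<tau> \<le> x" "x < (of_int n + 1) * \<tau>" using \<tau> by (auto simp: field_simps)
      then show ?thesis by (auto simp: y_def algebra_simps)
    qed
    have "\<Psi> x = \<Psi> y"
    proof (cases "n \<ge> 0")
      case True
      then have "x = y + real (nat n) * \<tau>" by (simp add: y_def)
      then show ?thesis using psi_int_periodic[of \<Psi> \<tau> y "nat n", OF per] by simp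
    next
      case False
      then have "y = x + real (nat (-n)) * \<tau>" by (simp add: y_def)
      then show ?thesis using psi_int_periodic[of \<Psi> \<tau> x "nat (-n)", OF per] by simp
    qed
    then show ?thesis using B[OF y] by simp
  qed
  then show ?thesis by (intro exI[of _ "\<bar>B\<bar> + 1"]) auto
qed

lemma integral_nonneg_any:
  fixes f :: "real \<Rightarrow> real"
  assumes "\<And>x. x \<in> S \<Longrightarrow> 0 \<le> f x"
  shows "0 \<le> integral S f"
  using assms by (cases "f integrable_on S") (auto intro: integral_nonneg simp: not_integrable_integral)

lemma integral_le_const_any:
  fixes f :: "real \<Rightarrow> real"
  assumes "\<And>x. x \<in> {a..b} \<Longrightarrow> f x \<le> M" "M \<ge> 0" "a \<le> b"
  shows "integral {a..b} f \<le> M * (b - a)"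
proof (cases "f integrable_on {a..b}")
  case True
  have "integral {a..b} f \<le> integral {a..b} (\<lambda>_. M)"
    using True assms by (intro integral_le) auto
  then show ?thesis using assms by (simp add: mult.commute)
next
  case False
  then show ?thesis using assms by (simp add: not_integrable_integral)
qed

lemma Sper_pos:
  assumes "exp (A*T)*(1-p) > 1" "0 \<le> p" "A > 0"
  shows "0 < Sper A p T t" "Sper A p T t \<le> A"
proof -
  define s where "s = t - T * of_int \<lfloor>t/T\<rfloor>"
  define K where "K = exp (A*T)*(1-p) - 1"
  have K: "K > 0" using assms by (simp add: K_def)
  have e: "Sper A p T t = A*K/(K + p*exp (A*(T-s)))" by (simp add: Sper_def s_def K_def Let_def)
  have d: "K + p*exp (A*(T-s)) \<ge> K" using assms by simp
  then have dp: "K + p*exp (A*(T-s)) > 0" using K by linarith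
  show "0 < Sper A p T t" unfolding e using K dp assms by simp
  have pp: "0 < (K + p*exp (A*(T-s))) * K" using dp K by simp
  have "A*K/(K + p*exp (A*(T-s))) \<le> A*K/K" using K d assms pp by (intro divide_left_mono) auto
  then show "Sper A p T t \<le> A" unfolding e using K by simp
qed

theorem corollary1:
  fixes A \<beta>0 \<sigma> g p T \<tau> :: real and \<Psi> \<Psi>' \<Psi>'' :: "real \<Rightarrow> real"
  assumes "0 < A" "A \<le> 1" "0 < \<beta>0" "0 \<le> \<sigma>" "0 \<le> g" "0 < \<sigma> + g"
    and "0 \<le> p" "p \<le> 1" "0 < T"
    and "A > (\<sigma> + g) / \<beta>0"
    and "0 < \<tau>" "\<And>x. \<Psi> (x + \<tau>) = \<Psi> x" "\<And>x. 0 \<le> \<Psi> x"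
    and "\<And>x. (\<Psi> has_real_derivative \<Psi>' x) (at x)"
    and "\<And>x. (\<Psi>' has_real_derivative \<Psi>'' x) (at x)"
    and "\<exists>c1 c2. c1 \<in> {0..<\<tau>} \<and> c2 \<in> {0..<\<tau>} \<and> c1 \<noteq> c2 \<and>
                 \<Psi>' c1 = 0 \<and> \<Psi>'' c1 \<noteq> 0 \<and> \<Psi>' c2 = 0 \<and> \<Psi>'' c2 \<noteq> 0"
  shows "\<exists>\<gamma>0 > 0. \<exists>\<omega>0 > 0. \<forall>\<gamma> \<omega>. 0 < \<gamma> \<and> \<gamma> < \<gamma>0 \<and> 0 < \<omega> \<and> \<omega> < \<omega>0 \<longrightarrow>
           (asymp_stable_periodic
              (si_field (beta_seas \<beta>0 \<gamma> \<omega> \<Psi>) A \<sigma> g) (si_jump p) T (Sper A p T 0, 0)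
            \<longleftrightarrow> p2_seas A ((\<sigma> + g) / \<beta>0) p \<gamma> \<omega> T \<Psi> T < p \<and> p < p1 A T)"
proof -
  note A = assms(1) and \<beta>0 = assms(3) and \<sigma> = assms(4) and gg = assms(5) and cpos = assms(6)
    and p0 = assms(7) and p1' = assms(8) and T = assms(9) and \<tau> = assms(11) and per = assms(12)
    and \<Psi>0 = assms(13)
  have \<Psi>c: "continuous_on UNIV \<Psi>"
    by (intro continuous_at_imp_continuous_on ballI DERIV_isCont[OF assms(14)])
  obtain Pm where Pm: "Pm > 0" "\<And>x. \<Psi> x \<le> Pm" using psi_bounded[OF \<Psi>c \<tau> per] by blast
  define E where "E = exp (A*T)"
  have E: "E > 1" using A T by (simp add: E_def)
  have Sper0: "Sper A p T 0 = A*(E*(1-p) - 1)/(E - 1)"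
    by (simp add: Sper_def E_def Let_def algebra_simps)
  have p1eq: "p < p1 A T \<longleftrightarrow> E*(1-p) > 1"
  proof -
    have "p < p1 A T \<longleftrightarrow> exp (-(A*T)) < 1 - p" by (auto simp: p1_def)
    also have "\<dots> \<longleftrightarrow> 1 < E*(1-p)" using E by (simp add: E_def exp_minus field_simps)
    finally show ?thesis .
  qed
  define bb where "bb \<gamma> \<omega> = beta_seas \<beta>0 \<gamma> \<omega> \<Psi>" for \<gamma> \<omega>
  have bprops: "continuous_on UNIV (bb \<gamma> \<omega>) \<and> (\<forall>t. \<beta>0 \<le> bb \<gamma> \<omega> t) \<and> (\<forall>t. bb \<gamma> \<omega> t \<le> 2*\<beta>0)
      \<and> (\<forall>t. bb \<gamma> \<omega> t - \<beta>0 \<le> \<beta>0*\<gamma>*Pm)" if g: "0 < \<gamma>" "\<gamma>*Pm \<le> 1" for \<gamma> \<omega>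
  proof (intro conjI allI)
    show "continuous_on UNIV (bb \<gamma> \<omega>)" unfolding bb_def beta_seas_def
      by (intro continuous_intros continuous_on_compose2[OF \<Psi>c]) auto
    fix t
    have h: "0 \<le> \<Psi> (\<omega>*t)" "\<Psi> (\<omega>*t) \<le> Pm" using \<Psi>0 Pm by auto
    have "\<gamma> * \<Psi> (\<omega>*t) \<le> \<gamma> * Pm" using h g by (intro mult_left_mono) auto
    moreover have "0 \<le> \<gamma> * \<Psi> (\<omega>*t)" using h g by simp
    ultimately have h1: "0 \<le> \<gamma> * \<Psi> (\<omega>*t)" "\<gamma> * \<Psi> (\<omega>*t) \<le> \<gamma> * Pm" by auto
    have h2: "\<gamma> * \<Psi> (\<omega>*t) \<le> 1" using h1(2) g(2) by (simp add: mult.commute)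
    have e: "bb \<gamma> \<omega> t = \<beta>0 + \<beta>0 * (\<gamma> * \<Psi> (\<omega>*t))" by (simp add: bb_def beta_seas_def algebra_simps)
    show "\<beta>0 \<le> bb \<gamma> \<omega> t" unfolding e using h1 \<beta>0 by simp
    have "\<beta>0 * (\<gamma> * \<Psi> (\<omega>*t)) \<le> \<beta>0 * 1" using h2 \<beta>0 by (intro mult_left_mono) auto
    then show "bb \<gamma> \<omega> t \<le> 2*\<beta>0" unfolding e by simp
    have "\<beta>0 * (\<gamma> * \<Psi> (\<omega>*t)) \<le> \<beta>0 * (\<gamma> * Pm)" using h1(2) \<beta>0 by (rule mult_left_mono[OF _ less_imp_le])
    then show "bb \<gamma> \<omega> t - \<beta>0 \<le> \<beta>0*\<gamma>*Pm" unfolding e by (simp add: mult.assoc)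
  qed
  have suff: "?thesis" if G0: "G0 > 0" and H: "\<And>\<gamma> \<omega>. 0 < \<gamma> \<Longrightarrow> \<gamma> < G0 \<Longrightarrow> 0 < \<omega> \<Longrightarrow>
      (asymp_stable_periodic (si_field (beta_seas \<beta>0 \<gamma> \<omega> \<Psi>) A \<sigma> g) (si_jump p) T (Sper A p T 0, 0)
            \<longleftrightarrow> p2_seas A ((\<sigma> + g) / \<beta>0) p \<gamma> \<omega> T \<Psi> T < p \<and> p < p1 A T)" for G0
  proof (rule exI[of _ G0], rule conjI[OF G0], rule exI[of _ 1], intro conjI allI impI)
    fix \<gamma> \<omega> :: real assume "0 < \<gamma> \<and> \<gamma> < G0 \<and> 0 < \<omega> \<and> \<omega> < 1"
    then show "asymp_stable_periodic (si_field (beta_seas \<beta>0 \<gamma> \<omega> \<Psi>) A \<sigma> g) (si_jump p) T (Sper A p T 0, 0)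
            \<longleftrightarrow> p2_seas A ((\<sigma> + g) / \<beta>0) p \<gamma> \<omega> T \<Psi> T < p \<and> p < p1 A T"
      using H by blast
  qed simp
  have Fb: "si_field (beta_seas \<beta>0 \<gamma> \<omega> \<Psi>) A \<sigma> g = si_field (bb \<gamma> \<omega>) A \<sigma> g" for \<gamma> \<omega>
    by (simp add: bb_def)
  have gP: "\<gamma>*Pm \<le> 1" if "0 < \<gamma>" "\<gamma> < 1/Pm" for \<gamma>
    using that Pm by (simp add: field_simps)
  show ?thesis
  proof (cases "p = 1")
    case True
    show ?thesis
    proof (rule suff[of 1])
      fix \<gamma> \<omega> :: real
      have s: "Sper A p T 0 \<noteq> 0" unfolding Sper0 using True E A by simp
      have "\<not> asymp_stable_periodic (si_field (beta_seas \<beta>0 \<gamma> \<omega> \<Psi>) A \<sigma> g) (si_jump p) T (Sper A p T 0, 0)"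
        using jump1_unstable[OF T s] True by simp
      moreover have "\<not> p < p1 A T" using p1eq True by simp
      ultimately show "asymp_stable_periodic (si_field (beta_seas \<beta>0 \<gamma> \<omega> \<Psi>) A \<sigma> g) (si_jump p) T (Sper A p T 0, 0)
            \<longleftrightarrow> p2_seas A ((\<sigma> + g) / \<beta>0) p \<gamma> \<omega> T \<Psi> T < p \<and> p < p1 A T" by simp
    qed simp
  next
    case pn1: False
    then have p1: "p < 1" using p1' by simp
    show ?thesis
    proof (cases "E*(1-p) > 1")
      case False
      show ?thesis
      proof (rule suff[of "1/Pm"])
        fix \<gamma> \<omega> :: real assume hg: "0 < \<gamma>" "\<gamma> < 1/Pm" "0 < \<omega>"
        have bp: "continuous_on UNIV (bb \<gamma> \<omega>)" "\<And>t. \<beta>0 \<le> bb \<gamma> \<omega> t" "\<And>t. bb \<gamma> \<omega> t \<le> 2*\<beta>0"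
          using bprops[OF hg(1) gP[OF hg(1,2)]] by auto
        interpret B: blowloc A \<beta>0 \<sigma> g p T "2*\<beta>0" "bb \<gamma> \<omega>"
          by unfold_locales (use A \<beta>0 \<sigma> gg cpos p0 p1 T bp False in \<open>auto simp: E_def\<close>)
        have "B.sstar = Sper A p T 0" by (simp add: B.sstar_def Sper0 E_def)
        then have "\<not> asymp_stable_periodic (si_field (beta_seas \<beta>0 \<gamma> \<omega> \<Psi>) A \<sigma> g) (si_jump p) T (Sper A p T 0, 0)"
          using B.blow by (simp add: Fb B.F_def)
        moreover have "\<not> p < p1 A T" using p1eq False by simp
        ultimately show "asymp_stable_periodic (si_field (beta_seas \<beta>0 \<gamma> \<omega> \<Psi>) A \<sigma> g) (si_jump p) T (Sper A p T 0, 0)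
            \<longleftrightarrow> p2_seas A ((\<sigma> + g) / \<beta>0) p \<gamma> \<omega> T \<Psi> T < p \<and> p < p1 A T" by simp
      qed (use Pm in simp)
    next
      case Kp: True
      define Q where "Q = \<beta>0*(A*T + ln (1-p)) - (\<sigma>+g)*T"
      define Sc where "Sc = (\<sigma>+g)/\<beta>0"
      have QSc: "Q = \<beta>0 * (A*T + ln (1-p) - Sc*T)" using \<beta>0 by (simp add: Q_def Sc_def field_simps)
      define Iint where "Iint \<gamma> \<omega> = integral {0..T} (\<lambda>t. \<Psi> (\<omega> * t) * Sper A p T t)" for \<gamma> \<omega> :: real
      have Ipos: "Sper A p T t > 0" "Sper A p T t \<le> A" for t using Sper_pos[of A T p t] Kp p0 A by (auto simp: E_def)
      have I0: "0 \<le> Iint \<gamma> \<omega>" for \<gamma> \<omega> unfolding Iint_def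
        by (rule integral_nonneg_any) (use \<Psi>0 Ipos(1) in \<open>auto intro: mult_nonneg_nonneg less_imp_le\<close>)
      have Ile: "Iint \<gamma> \<omega> \<le> Pm * A * T" for \<gamma> \<omega>
      proof -
        have "Iint \<gamma> \<omega> \<le> (Pm * A) * (T - 0)" unfolding Iint_def
        proof (rule integral_le_const_any)
          fix t assume "t \<in> {0..T}"
          show "\<Psi> (\<omega> * t) * Sper A p T t \<le> Pm * A"
            using Pm \<Psi>0 Ipos[of t] by (intro mult_mono) (auto intro: less_imp_le)
        qed (use Pm A T in auto)
        then show ?thesis by simp
      qed
      have p2eq: "p2_seas A ((\<sigma> + g) / \<beta>0) p \<gamma> \<omega> T \<Psi> T = 1 - exp (- ((A - Sc) * T + \<gamma> * Iint \<gamma> \<omega>))" for \<gamma> \<omega>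
        by (simp add: p2_seas_def Sc_def Iint_def)
      show ?thesis
      proof (cases "Q \<ge> 0")
        case True
        show ?thesis
        proof (rule suff[of "1/Pm"])
          fix \<gamma> \<omega> :: real assume hg: "0 < \<gamma>" "\<gamma> < 1/Pm" "0 < \<omega>"
          have bp: "continuous_on UNIV (bb \<gamma> \<omega>)" "\<And>t. \<beta>0 \<le> bb \<gamma> \<omega> t" "\<And>t. bb \<gamma> \<omega> t \<le> 2*\<beta>0"
            using bprops[OF hg(1) gP[OF hg(1,2)]] by auto
          have BL: "baseloc A \<beta>0 \<sigma> g p T (2*\<beta>0) (bb \<gamma> \<omega>)"
            by unfold_locales (use A \<beta>0 \<sigma> gg cpos p0 p1 T bp in auto)
          have SL: "sysloc A \<beta>0 \<sigma> g p T (2*\<beta>0) (bb \<gamma> \<omega>)"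
            by (rule sysloc.intro[OF BL], unfold_locales) (use Kp in \<open>simp add: E_def\<close>)
          interpret U: unstloc A \<beta>0 \<sigma> g p T "2*\<beta>0" "bb \<gamma> \<omega>"
            by (rule unstloc.intro[OF SL], unfold_locales) (use True in \<open>simp add: Q_def baseloc.c_def[OF BL]\<close>)
          have "1/U.u0 = Sper A p T 0" by (simp add: U.u0_eq Sper0 E_def U.Ke_def)
          then have "\<not> asymp_stable_periodic (si_field (beta_seas \<beta>0 \<gamma> \<omega> \<Psi>) A \<sigma> g) (si_jump p) T (Sper A p T 0, 0)"
            using U.unstable by (simp add: Fb U.F_def)
          moreover have "\<not> p2_seas A ((\<sigma> + g) / \<beta>0) p \<gamma> \<omega> T \<Psi> T < p"
          proof -
            have "A*T + ln (1-p) - Sc*T \<ge> 0" using True QSc \<beta>0 by (simp add: zero_le_mult_iff)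
            then have "-((A - Sc)*T) \<le> ln (1-p)" by (simp add: algebra_simps)
            then have "exp (-((A - Sc)*T)) \<le> 1 - p" using p1 by (metis exp_le_cancel_iff exp_ln diff_gt_0_iff_gt)
            moreover have "exp (- ((A - Sc) * T + \<gamma> * Iint \<gamma> \<omega>)) \<le> exp (-((A - Sc)*T))"
              using I0[of \<gamma> \<omega>] hg by simp
            ultimately have "exp (- ((A - Sc) * T + \<gamma> * Iint \<gamma> \<omega>)) \<le> 1 - p" by linarith
            then show ?thesis unfolding p2eq by linarith
          qed
          ultimately show "asymp_stable_periodic (si_field (beta_seas \<beta>0 \<gamma> \<omega> \<Psi>) A \<sigma> g) (si_jump p) T (Sper A p T 0, 0)
            \<longleftrightarrow> p2_seas A ((\<sigma> + g) / \<beta>0) p \<gamma> \<omega> T \<Psi> T < p \<and> p < p1 A T" by simp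
        qed (use Pm in simp)
      next
        case False
        define \<mu> where "\<mu> = - Q/2"
        have \<mu>: "\<mu> > 0" using False by (simp add: \<mu>_def)
        define um where "um = (1-p)*((E - 1)/(A*(E*(1-p) - 1)))/2"
        have um: "um > 0" using p1 E Kp A by (simp add: um_def)
        define G0 where "G0 = min (1/Pm) (min (\<mu>*um/(2*T*\<beta>0*Pm)) (\<mu>/(\<beta>0*Pm*A*T)))"
        have G0: "G0 > 0" using Pm \<mu> um T \<beta>0 A by (simp add: G0_def)
        show ?thesis
        proof (rule suff[OF G0])
          fix \<gamma> \<omega> :: real assume hg: "0 < \<gamma>" "\<gamma> < G0" "0 < \<omega>"
          have hg2: "\<gamma> < 1/Pm" "\<gamma> < \<mu>*um/(2*T*\<beta>0*Pm)" "\<gamma> < \<mu>/(\<beta>0*Pm*A*T)"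
            using hg by (auto simp: G0_def)
          have bp: "continuous_on UNIV (bb \<gamma> \<omega>)" "\<And>t. \<beta>0 \<le> bb \<gamma> \<omega> t" "\<And>t. bb \<gamma> \<omega> t \<le> 2*\<beta>0"
            "\<And>t. bb \<gamma> \<omega> t - \<beta>0 \<le> \<beta>0*\<gamma>*Pm"
            using bprops[OF hg(1) gP[OF hg(1) hg2(1)]] by auto
          have dbT: "\<beta>0*\<gamma>*Pm*T/um \<le> \<mu>/2"
          proof -
            have "\<gamma> * (2*T*\<beta>0*Pm) \<le> \<mu>*um" using hg2(2) T \<beta>0 Pm by (simp add: pos_less_divide_eq)
            then show ?thesis using um by (simp add: field_simps)
          qed
          have BL: "baseloc A \<beta>0 \<sigma> g p T (2*\<beta>0) (bb \<gamma> \<omega>)"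
            by unfold_locales (use A \<beta>0 \<sigma> gg cpos p0 p1 T bp in auto)
          have SL: "sysloc A \<beta>0 \<sigma> g p T (2*\<beta>0) (bb \<gamma> \<omega>)"
            by (rule sysloc.intro[OF BL], unfold_locales) (use Kp in \<open>simp add: E_def\<close>)
          have umeq: "sysloc.umin A p T = um"
            unfolding sysloc.umin_def[OF SL] sysloc.u0_eq[OF SL] sysloc.Ke_def[OF SL] um_def E_def ..
          interpret S: stabloc A \<beta>0 \<sigma> g p T "2*\<beta>0" "bb \<gamma> \<omega>" \<mu> "\<beta>0*\<gamma>*Pm"
          proof (rule stabloc.intro[OF SL], unfold_locales)
            show "\<beta>0 * (A * T + ln (1 - p)) - baseloc.c \<sigma> g * T = - 2 * \<mu>"
              by (simp add: \<mu>_def Q_def baseloc.c_def[OF BL])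
            show "\<beta>0*\<gamma>*Pm*T / sysloc.umin A p T \<le> \<mu>/2" using dbT umeq by simp
          qed (use \<mu> bp in auto)
          have "1/S.u0 = Sper A p T 0" by (simp add: S.u0_eq Sper0 E_def S.Ke_def)
          then have "asymp_stable_periodic (si_field (beta_seas \<beta>0 \<gamma> \<omega> \<Psi>) A \<sigma> g) (si_jump p) T (Sper A p T 0, 0)"
            using S.stable by (simp add: Fb S.F_def)
          moreover have "p2_seas A ((\<sigma> + g) / \<beta>0) p \<gamma> \<omega> T \<Psi> T < p"
          proof -
            have "\<gamma> * Iint \<gamma> \<omega> \<le> \<gamma> * (Pm*A*T)" using Ile hg by (intro mult_left_mono) auto
            also have "\<dots> < \<mu>/\<beta>0"
              using hg2(3) Pm A T \<beta>0 by (simp add: pos_less_divide_eq field_simps)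
            finally have gi: "\<gamma> * Iint \<gamma> \<omega> < \<mu>/\<beta>0" .
            have e1: "A*T + ln (1-p) - Sc*T = -2*(\<mu>/\<beta>0)" using QSc \<beta>0 by (simp add: \<mu>_def field_simps)
            have mb: "\<mu>/\<beta>0 > 0" using \<mu> \<beta>0 by simp
            have "(A - Sc) * T = A*T - Sc*T" by (simp add: algebra_simps)
            then have "ln (1-p) < - ((A - Sc) * T + \<gamma> * Iint \<gamma> \<omega>)"
              using gi mb e1 by linarith
            then have "1 - p < exp (- ((A - Sc) * T + \<gamma> * Iint \<gamma> \<omega>))"
              using p1 by (metis exp_less_cancel_iff exp_ln diff_gt_0_iff_gt)
            then show ?thesis unfolding p2eq by simp
          qed
          moreover have "p < p1 A T" using p1eq Kp by simp
          ultimately show "asymp_stable_periodic (si_field (beta_seas \<beta>0 \<gamma> \<omega> \<Psi>) A \<sigma> g) (si_jump p) T (Sper A p T 0, 0)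
            \<longleftrightarrow> p2_seas A ((\<sigma> + g) / \<beta>0) p \<gamma> \<omega> T \<Psi> T < p \<and> p < p1 A T" by simp
        qed
      qed
    qed
  qed
qed


end
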